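(* Let $G$ be a 3-connected cubic near-bipartite graph with removable doubleton $\{e_1,e_2\}$, let $H=G-\{e_1,e_2\}$ have bipartition $(U,W)$ with both ends of $e_1$ in $U$ (and hence both ends of $e_2$ in $W$), and let $\partial(X)$ be a nontrivial 3-cut of $G$. Then $|X|$ is odd and both $G/X$ and $G/\overline{X}$ are 3-connected cubic graphs. Moreover, if $|X\cap U|\ge |X\cap W|$, then: (i) $|X\cap U|=|X\cap W|+1$; (ii) $\partial(X)$ is a good cut of $G$ if and only if both ends of $e_1$ lie in $X\cap U$, both ends of $e_2$ lie in $\overline{X}\cap W$, $|E_G[X\cap U,\overline{X}\cap W]|=2$, and $E_G[X\cap W,\overline{X}\cap U]$ consists of exactly one edge $zw$ with $w\in X\cap W$. In this case $zw$ is nonremovable in $G$, $G/\overline{X}$ (with contracted vertex $\overline{x}$) is near-bipartite with removable doubleton $\{e_1,w\overline{x}\}$, and $G/X$ (with contracted vertex $x$) is near-bipartite with removable doubleton $\{e_2,zx\}$.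
   Context: Graphs may have multiple edges but no loops. An edge is admissible if it lies in some perfect matching; a connected graph with at least two vertices is matching covered if every edge is admissible; an edge $e$ of a matching covered graph $G$ is removable if $G-e$ is matching covered. A nonbipartite matching covered graph $G$ is near-bipartite if it has a pair of edges $\{e_1,e_2\}$ (a removable doubleton) such that $G-\{e_1,e_2\}$ is bipartite matching covered. For $X\subseteq V(G)$, $\overline{X}=V(G)\setminus X$, $\partial(X)$ is the set of edges with one end in $X$ and one in $\overline{X}$; it is a $k$-cut if $|\partial(X)|=k$, and nontrivial if $|X|\ge2$ and $|\overline{X}|\ge 2$. $G/X$ is the graph obtained by contracting $X$ to a single vertex $x$ (removing edges inside $X$); $G/\overline{X}$ similarly with contracted vertex $\overline{x}$. $E_G[Y,Z]$ is the set of edges with one end in $Y$ and the other in $Z$. For a matching covered $G$, a cut $C=\partial(X)$ is tight if $|M\cap C|=1$ for every perfect matching $M$ of $G$, separating if both $G/X$ and $G/\overline{X}$ are matching covered, and good if it is separating but not tight. *)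

theory Defs
  imports Main
begin

text \<open>Finite multigraphs without loops: vertex set, edge identifiers, and an
  endpoint map sending each edge to its 2-element set of ends.\<close>

record ('v, 'e) mgraph =
  verts :: "'v set"
  edges :: "'e set"
  endpts :: "'e \<Rightarrow> 'v set"

definition wf_graph :: "('v, 'e) mgraph \<Rightarrow> bool" where
  "wf_graph G \<longleftrightarrow> finite (verts G) \<and> finite (edges G) \<and>
     (\<forall>e\<in>edges G. endpts G e \<subseteq> verts G \<and> card (endpts G e) = 2)"

definition adj_rel :: "('v, 'e) mgraph \<Rightarrow> ('v \<times> 'v) set" where
  "adj_rel G = {(u, v). \<exists>e\<in>edges G. endpts G e = {u, v}}"

definition connected_graph :: "('v, 'e) mgraph \<Rightarrow> bool" where
  "connected_graph G \<longleftrightarrow> verts G \<noteq> {} \<and>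
     (\<forall>u\<in>verts G. \<forall>v\<in>verts G. (u, v) \<in> (adj_rel G)\<^sup>*)"

definition del_edges :: "('v, 'e) mgraph \<Rightarrow> 'e set \<Rightarrow> ('v, 'e) mgraph" where
  "del_edges G F = G\<lparr>edges := edges G - F\<rparr>"

definition del_verts :: "('v, 'e) mgraph \<Rightarrow> 'v set \<Rightarrow> ('v, 'e) mgraph" where
  "del_verts G S = G\<lparr>verts := verts G - S,
      edges := {e \<in> edges G. endpts G e \<inter> S = {}}\<rparr>"

definition degree :: "('v, 'e) mgraph \<Rightarrow> 'v \<Rightarrow> nat" where
  "degree G v = card {e \<in> edges G. v \<in> endpts G e}"

definition cubic :: "('v, 'e) mgraph \<Rightarrow> bool" where
  "cubic G \<longleftrightarrow> wf_graph G \<and> (\<forall>v\<in>verts G. degree G v = 3)"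

definition k_connected :: "nat \<Rightarrow> ('v, 'e) mgraph \<Rightarrow> bool" where
  "k_connected k G \<longleftrightarrow> wf_graph G \<and> card (verts G) > k \<and>
     (\<forall>S. S \<subseteq> verts G \<and> card S < k \<longrightarrow> connected_graph (del_verts G S))"

definition perfect_matching :: "('v, 'e) mgraph \<Rightarrow> 'e set \<Rightarrow> bool" where
  "perfect_matching G M \<longleftrightarrow> M \<subseteq> edges G \<and>
     (\<forall>v\<in>verts G. \<exists>!e. e \<in> M \<and> v \<in> endpts G e)"

definition admissible :: "('v, 'e) mgraph \<Rightarrow> 'e \<Rightarrow> bool" where
  "admissible G e \<longleftrightarrow> (\<exists>M. perfect_matching G M \<and> e \<in> M)"

definition matching_covered :: "('v, 'e) mgraph \<Rightarrow> bool" where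
  "matching_covered G \<longleftrightarrow> wf_graph G \<and> connected_graph G \<and> card (verts G) \<ge> 2 \<and>
     (\<forall>e\<in>edges G. admissible G e)"

definition removable :: "('v, 'e) mgraph \<Rightarrow> 'e \<Rightarrow> bool" where
  "removable G e \<longleftrightarrow> e \<in> edges G \<and> matching_covered (del_edges G {e})"

definition bipartition :: "('v, 'e) mgraph \<Rightarrow> 'v set \<Rightarrow> 'v set \<Rightarrow> bool" where
  "bipartition G U W \<longleftrightarrow> U \<inter> W = {} \<and> U \<union> W = verts G \<and>
     (\<forall>e\<in>edges G. \<exists>u\<in>U. \<exists>w\<in>W. endpts G e = {u, w})"

definition bipartite :: "('v, 'e) mgraph \<Rightarrow> bool" where
  "bipartite G \<longleftrightarrow> (\<exists>U W. bipartition G U W)"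

definition near_bipartite_rd :: "('v, 'e) mgraph \<Rightarrow> 'e \<Rightarrow> 'e \<Rightarrow> bool" where
  "near_bipartite_rd G e1 e2 \<longleftrightarrow> matching_covered G \<and> \<not> bipartite G \<and>
     e1 \<in> edges G \<and> e2 \<in> edges G \<and> e1 \<noteq> e2 \<and>
     bipartite (del_edges G {e1, e2}) \<and> matching_covered (del_edges G {e1, e2})"

definition cut :: "('v, 'e) mgraph \<Rightarrow> 'v set \<Rightarrow> 'e set" where
  "cut G X = {e \<in> edges G. card (endpts G e \<inter> X) = 1}"

definition edges_between :: "('v, 'e) mgraph \<Rightarrow> 'v set \<Rightarrow> 'v set \<Rightarrow> 'e set" where
  "edges_between G Y Z = {e \<in> edges G. \<exists>y\<in>Y. \<exists>z\<in>Z. endpts G e = {y, z}}"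

text \<open>Contraction G/X: X is shrunk to the single new vertex None; the other
  vertices v become Some v; edges inside X are removed; edge identities kept.\<close>
definition contract :: "('v, 'e) mgraph \<Rightarrow> 'v set \<Rightarrow> ('v option, 'e) mgraph" where
  "contract G X = \<lparr> verts = insert None (Some ` (verts G - X)),
     edges = {e \<in> edges G. \<not> endpts G e \<subseteq> X},
     endpts = (\<lambda>e. (\<lambda>v. if v \<in> X then None else Some v) ` endpts G e) \<rparr>"

definition tight_cut :: "('v, 'e) mgraph \<Rightarrow> 'v set \<Rightarrow> bool" where
  "tight_cut G X \<longleftrightarrow> (\<forall>M. perfect_matching G M \<longrightarrow> card (M \<inter> cut G X) = 1)"

definition separating_cut :: "('v, 'e) mgraph \<Rightarrow> 'v set \<Rightarrow> bool" where
  "separating_cut G X \<longleftrightarrow> matching_covered (contract G X) \<and>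
     matching_covered (contract G (verts G - X))"

definition good_cut :: "('v, 'e) mgraph \<Rightarrow> 'v set \<Rightarrow> bool" where
  "good_cut G X \<longleftrightarrow> separating_cut G X \<and> \<not> tight_cut G X"

end

theory Submission
  imports Defs
begin



lemma double_count:
  assumes "finite E" "finite Y"
  shows "(\<Sum>v\<in>Y. card {e\<in>E. v \<in> P e}) = (\<Sum>e\<in>E. card (P e \<inter> Y))"
proof -
  have 1: "card {e\<in>E. v \<in> P e} = (\<Sum>e\<in>E. if v \<in> P e then 1 else 0)" for v
    using assms(1) by (simp add: sum.If_cases Int_def conj_commute)
  have 2: "card (P e \<inter> Y) = (\<Sum>v\<in>Y. if v \<in> P e then 1 else 0)" for e
  proof -
    have "P e \<inter> Y = {v\<in>Y. v \<in> P e}" by blast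
    thus ?thesis using assms(2) by (simp add: sum.If_cases Int_def)
  qed
  show ?thesis unfolding 1 2 by (rule sum.swap)
qed

lemma wf_finite_edges: "wf_graph G \<Longrightarrow> finite (edges G)" by (simp add: wf_graph_def)
lemma wf_finite_verts: "wf_graph G \<Longrightarrow> finite (verts G)" by (simp add: wf_graph_def)
lemma wf_endpts: "wf_graph G \<Longrightarrow> e \<in> edges G \<Longrightarrow> endpts G e \<subseteq> verts G"
  by (simp add: wf_graph_def)
lemma wf_card2: "wf_graph G \<Longrightarrow> e \<in> edges G \<Longrightarrow> card (endpts G e) = 2"
  by (simp add: wf_graph_def)
lemma wf_two: assumes "wf_graph G" "e \<in> edges G"
  obtains u v where "endpts G e = {u,v}" "u \<noteq> v" "u \<in> verts G" "v \<in> verts G"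
  using wf_card2[OF assms] wf_endpts[OF assms] by (metis card_2_iff insert_subset)

lemma cubic_sum:
  assumes "cubic G" "Y \<subseteq> verts G"
  shows "(\<Sum>e\<in>edges G. card (endpts G e \<inter> Y)) = 3 * card Y"
proof -
  have wf: "wf_graph G" using assms(1) by (simp add: cubic_def)
  have fY: "finite Y" using assms(2) wf_finite_verts[OF wf] finite_subset by blast
  have "(\<Sum>e\<in>edges G. card (endpts G e \<inter> Y)) = (\<Sum>v\<in>Y. card {e\<in>edges G. v \<in> endpts G e})"
    using double_count[OF wf_finite_edges[OF wf] fY] by simp
  also have "\<dots> = (\<Sum>v\<in>Y. 3)"
    using assms by (intro sum.cong) (auto simp: cubic_def degree_def)
  finally show ?thesis by simp
qed

lemma pm_sum:
  assumes "wf_graph G" "perfect_matching G M" "Y \<subseteq> verts G"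
  shows "(\<Sum>e\<in>M. card (endpts G e \<inter> Y)) = card Y"
proof -
  have fM: "finite M" using assms(1,2) wf_finite_edges finite_subset
    unfolding perfect_matching_def by blast
  have fY: "finite Y" using assms(3) wf_finite_verts[OF assms(1)] finite_subset by blast
  have "(\<Sum>e\<in>M. card (endpts G e \<inter> Y)) = (\<Sum>v\<in>Y. card {e\<in>M. v \<in> endpts G e})"
    using double_count[OF fM fY] by simp
  also have "\<dots> = (\<Sum>v\<in>Y. 1)"
  proof (intro sum.cong refl)
    fix v assume "v \<in> Y"
    then obtain e where "e \<in> M" "v \<in> endpts G e" "\<forall>e'. e' \<in> M \<and> v \<in> endpts G e' \<longrightarrow> e' = e"
      using assms(2,3) unfolding perfect_matching_def by blast
    hence "{e\<in>M. v \<in> endpts G e} = {e}" by blast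
    thus "card {e\<in>M. v \<in> endpts G e} = 1" by simp
  qed
  finally show ?thesis by simp
qed

lemma card_int_le2: "wf_graph G \<Longrightarrow> e \<in> edges G \<Longrightarrow> card (endpts G e \<inter> Y) \<le> 2"
  by (metis card_mono finite_Int inf_le1 card_gt_0_iff wf_card2 zero_less_numeral linorder_not_le less_imp_le)

lemma odd_cut:
  assumes "cubic G" "Y \<subseteq> verts G" "card (cut G Y) = 3"
  shows "odd (card Y)"
proof -
  have wf: "wf_graph G" using assms(1) by (simp add: cubic_def)
  have fE: "finite (edges G)" by (rule wf_finite_edges[OF wf])
  let ?A = "{e\<in>edges G. card (endpts G e \<inter> Y) = 2}"
  let ?B = "{e\<in>edges G. card (endpts G e \<inter> Y) = 1}"
  have "(\<Sum>e\<in>edges G. card (endpts G e \<inter> Y)) =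
        (\<Sum>e\<in>edges G. (if card (endpts G e \<inter> Y) = 2 then 2 else 0) + (if card (endpts G e \<inter> Y) = 1 then 1 else 0))"
  proof (intro sum.cong refl)
    fix e assume "e \<in> edges G"
    from card_int_le2[OF wf this, of Y]
    show "card (endpts G e \<inter> Y) = (if card (endpts G e \<inter> Y) = 2 then 2 else 0) + (if card (endpts G e \<inter> Y) = 1 then 1 else 0)"
      by auto
  qed
  also have "\<dots> = 2 * card ?A + card ?B"
    using fE by (simp add: sum.distrib sum.If_cases Int_def)
  finally have "3 * card Y = 2 * card ?A + card ?B" using cubic_sum[OF assms(1,2)] by simp
  moreover have "?B = cut G Y" by (simp add: cut_def)
  ultimately have "3 * card Y = 2 * card ?A + 3" using assms(3) by simp
  thus ?thesis by presburger
qed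




lemma adj_sym: "(u,v) \<in> adj_rel G \<Longrightarrow> (v,u) \<in> adj_rel G"
  unfolding adj_rel_def by (auto simp: insert_commute)

lemma rtrancl_adj_sym: "(u,v) \<in> (adj_rel G)\<^sup>* \<Longrightarrow> (v,u) \<in> (adj_rel G)\<^sup>*"
proof (induction rule: rtrancl_induct)
  case base thus ?case by simp
next
  case (step y z)
  have "(z,y) \<in> adj_rel G" using adj_sym[OF step(2)] .
  thus ?case using step(3) by (meson converse_rtrancl_into_rtrancl)
qed

lemma closed_set:
  assumes "connected_graph G" "a \<in> A" "a \<in> verts G"
    and "\<And>e. e \<in> edges G \<Longrightarrow> endpts G e \<inter> A \<noteq> {} \<Longrightarrow> endpts G e \<subseteq> A"
  shows "verts G \<subseteq> A"
proof
  fix v assume "v \<in> verts G"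
  hence "(a,v) \<in> (adj_rel G)\<^sup>*" using assms(1,3) unfolding connected_graph_def by blast
  thus "v \<in> A"
  proof (induction rule: rtrancl_induct)
    case base thus ?case using assms(2) .
  next
    case (step y z)
    then obtain e where "e \<in> edges G" "endpts G e = {y,z}" unfolding adj_rel_def by blast
    thus ?case using assms(4) step(3) by blast
  qed
qed

lemma root_conn:
  assumes "r \<in> verts G" "\<And>v. v \<in> verts G \<Longrightarrow> (r,v) \<in> (adj_rel G)\<^sup>*"
  shows "connected_graph G"
  unfolding connected_graph_def
  using assms rtrancl_adj_sym by (metis empty_iff rtrancl_trans)

lemma del_verts_simps[simp]:
  "verts (del_verts G S) = verts G - S"
  "edges (del_verts G S) = {e \<in> edges G. endpts G e \<inter> S = {}}"
  "endpts (del_verts G S) = endpts G"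
  by (simp_all add: del_verts_def)

lemma del_edges_simps[simp]:
  "verts (del_edges G F) = verts G"
  "edges (del_edges G F) = edges G - F"
  "endpts (del_edges G F) = endpts G"
  by (simp_all add: del_edges_def)

lemma del_verts_empty: "del_verts G {} = G"
  by (simp add: del_verts_def)

lemma kconn_wf: "k_connected k G \<Longrightarrow> wf_graph G" by (simp add: k_connected_def)

lemma kconn_connected: "k_connected 3 G \<Longrightarrow> connected_graph G"
  unfolding k_connected_def using del_verts_empty by (metis card.empty empty_subsetI zero_less_numeral)

lemma sep:
  assumes kc: "k_connected 3 G" and S: "S \<subseteq> verts G" "card S \<le> 2"
    and A: "A \<subseteq> verts G - S" "a \<in> A" and x: "x \<in> verts G - S - A"
    and cl: "\<And>e. e \<in> edges G \<Longrightarrow> endpts G e \<inter> A \<noteq> {} \<Longrightarrow> endpts G e \<subseteq> A \<union> S"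
  shows False
proof -
  have "connected_graph (del_verts G S)" using kc S unfolding k_connected_def by auto
  hence "verts (del_verts G S) \<subseteq> A"
  proof (rule closed_set)
    show "a \<in> A" by fact
    show "a \<in> verts (del_verts G S)" using A by auto
    fix e assume "e \<in> edges (del_verts G S)" "endpts (del_verts G S) e \<inter> A \<noteq> {}"
    thus "endpts (del_verts G S) e \<subseteq> A" using cl by auto
  qed
  thus False using x by auto
qed

lemma cut_compl:
  assumes "wf_graph G"
  shows "cut G (verts G - Y) = cut G Y"
proof -
  have "card (endpts G e \<inter> (verts G - Y)) = 1 \<longleftrightarrow> card (endpts G e \<inter> Y) = 1" if eE: "e \<in> edges G" for e
  proof -
    obtain u v where uv: "endpts G e = {u,v}" "u \<noteq> v" "u \<in> verts G" "v \<in> verts G"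
      using wf_two[OF assms eE] by blast
    show ?thesis using uv by (cases "u \<in> Y"; cases "v \<in> Y") (auto simp: Int_insert_left)
  qed
  thus ?thesis unfolding cut_def by auto
qed

lemma cut_edge_ends:
  assumes "wf_graph G" "e \<in> cut G Y"
  obtains y t where "endpts G e = {y,t}" "y \<in> Y" "t \<notin> Y" "y \<in> verts G" "t \<in> verts G"
proof -
  have e: "e \<in> edges G" "card (endpts G e \<inter> Y) = 1" using assms(2) by (auto simp: cut_def)
  obtain u v where uv: "endpts G e = {u,v}" "u \<noteq> v" "u \<in> verts G" "v \<in> verts G"
    using wf_two[OF assms(1) e(1)] by blast
  show ?thesis
  proof (cases "u \<in> Y")
    case True
    hence "v \<notin> Y" using e(2) uv by (auto simp: Int_insert_left)
    thus ?thesis using that[of u v] True uv by auto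
  next
    case False
    hence "v \<in> Y" using e(2) uv by (cases "v \<in> Y") (auto simp: Int_insert_left)
    thus ?thesis using that[of v u] False uv by (auto simp: insert_commute)
  qed
qed

lemma meets_not_sub_cut:
  assumes "wf_graph G" "e \<in> edges G" "endpts G e \<inter> Y \<noteq> {}" "\<not> endpts G e \<subseteq> Y"
  shows "e \<in> cut G Y"
proof -
  obtain u v where uv: "endpts G e = {u,v}" "u \<noteq> v"
    using wf_two[OF assms(1,2)] by blast
  show ?thesis using assms(2-4) uv unfolding cut_def
    by (cases "u \<in> Y"; cases "v \<in> Y") (auto simp: Int_insert_left)
qed

lemma ec_opt1:
  assumes kc: "k_connected 3 G" and Y: "Y \<subseteq> verts G" and c2: "card (cut G Y) \<le> 2"
    and a: "a \<in> Y - (\<Union>e\<in>cut G Y. endpts G e \<inter> Y)" and x: "x \<in> verts G - Y"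
  shows False
proof -
  have wf: "wf_graph G" using kc by (rule kconn_wf)
  let ?C = "cut G Y"
  let ?S = "\<Union>e\<in>?C. endpts G e \<inter> Y"
  have fC: "finite ?C" using wf_finite_edges[OF wf] by (simp add: cut_def)
  have sing: "card (endpts G e \<inter> Y) = 1" if "e \<in> ?C" for e using that by (simp add: cut_def)
  have "card ?S \<le> (\<Sum>e\<in>?C. card (endpts G e \<inter> Y))" by (rule card_UN_le[OF fC])
  also have "\<dots> = card ?C" using sing by simp
  finally have cS: "card ?S \<le> 2" using c2 by simp
  show False
  proof (rule sep[OF kc _ cS, of "Y - ?S" a x])
    show "?S \<subseteq> verts G" using Y by auto
    show "Y - ?S \<subseteq> verts G - ?S" using Y by auto
    show "a \<in> Y - ?S" using a by blast
    show "x \<in> verts G - ?S - (Y - ?S)" using x by auto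
    fix e assume e: "e \<in> edges G" "endpts G e \<inter> (Y - ?S) \<noteq> {}"
    show "endpts G e \<subseteq> Y - ?S \<union> ?S"
    proof (rule ccontr)
      assume "\<not> endpts G e \<subseteq> Y - ?S \<union> ?S"
      hence "\<not> endpts G e \<subseteq> Y" by auto
      hence "e \<in> ?C" using meets_not_sub_cut[OF wf e(1)] e(2) by blast
      thus False using e(2) by blast
    qed
  qed
qed

lemma edge_conn3:
  assumes kc: "k_connected 3 G" and Y: "Y \<subseteq> verts G" "Y \<noteq> {}" "verts G - Y \<noteq> {}"
  shows "3 \<le> card (cut G Y)"
proof (rule ccontr)
  assume "\<not> 3 \<le> card (cut G Y)"
  hence c2: "card (cut G Y) \<le> 2" by simp
  have wf: "wf_graph G" using kc by (rule kconn_wf)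
  have fV: "finite (verts G)" using wf by (rule wf_finite_verts)
  have V4: "card (verts G) \<ge> 4" using kc by (simp add: k_connected_def)
  let ?C = "cut G Y"
  have fC: "finite ?C" using wf_finite_edges[OF wf] by (simp add: cut_def)
  define Ys where "Ys = (\<Union>e\<in>?C. endpts G e \<inter> Y)"
  define Ts where "Ts = (\<Union>e\<in>cut G (verts G - Y). endpts G e \<inter> (verts G - Y))"
  have Y1: "Y \<subseteq> Ys"
  proof (rule ccontr)
    assume "\<not> Y \<subseteq> Ys" then obtain a where "a \<in> Y - Ys" by blast
    moreover obtain x where "x \<in> verts G - Y" using Y by blast
    ultimately show False using ec_opt1[OF kc Y(1) c2] unfolding Ys_def by blast
  qed
  have Y2: "verts G - Y \<subseteq> Ts"
  proof (rule ccontr)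
    assume "\<not> verts G - Y \<subseteq> Ts" then obtain a where "a \<in> (verts G - Y) - Ts" by blast
    moreover obtain x where "x \<in> Y" using Y by blast
    moreover have "x \<in> verts G - (verts G - Y)" using Y calculation(2) by blast
    moreover have "card (cut G (verts G - Y)) \<le> 2" using c2 cut_compl[OF wf] by simp
    ultimately show False using ec_opt1[OF kc, of "verts G - Y" a x] unfolding Ts_def by blast
  qed
  have sing: "card (endpts G e \<inter> Y) = 1" if "e \<in> ?C" for e using that by (simp add: cut_def)
  have "card Ys \<le> (\<Sum>e\<in>?C. card (endpts G e \<inter> Y))" unfolding Ys_def by (rule card_UN_le[OF fC])
  also have "\<dots> = card ?C" using sing by simp
  finally have cYs: "card Ys \<le> card ?C" .
  have sing2: "card (endpts G e \<inter> (verts G - Y)) = 1" if eC: "e \<in> ?C" for e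
  proof -
    have "e \<in> cut G (verts G - Y)" using eC cut_compl[OF wf, of Y] by simp
    thus ?thesis by (simp add: cut_def)
  qed
  have "card Ts \<le> (\<Sum>e\<in>?C. card (endpts G e \<inter> (verts G - Y)))"
    unfolding Ts_def cut_compl[OF wf] by (rule card_UN_le[OF fC])
  also have "\<dots> = card ?C" using sing2 by simp
  finally have cTs: "card Ts \<le> card ?C" .
  have "Ys \<subseteq> verts G" unfolding Ys_def using Y(1) by blast
  hence fYs: "finite Ys" using fV finite_subset by blast
  have "Ts \<subseteq> verts G" unfolding Ts_def by blast
  hence fTs: "finite Ts" using fV finite_subset by blast
  have "card Y \<le> card Ys" using card_mono[OF fYs Y1] .
  moreover have "card (verts G - Y) \<le> card Ts" using card_mono[OF fTs Y2] .
  moreover have "card (verts G) = card Y + card (verts G - Y)"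
  proof -
    have "finite Y" using Y(1) fV finite_subset by blast
    thus ?thesis using card_Diff_subset[of Y "verts G"] card_mono[OF fV Y(1)] Y(1) by simp
  qed
  ultimately have cC: "card ?C = 2" and cY: "card Y = 2" and cYs2: "card Ys = 2" and cTs2: "card Ts = 2"
    using V4 c2 cYs cTs by linarith+
  obtain c1 c2' where C12: "?C = {c1, c2'}" "c1 \<noteq> c2'"
    using cC unfolding card_2_iff by blast
  have c1C: "c1 \<in> ?C" and c2C: "c2' \<in> ?C" using C12(1) by auto
  obtain y1 t1 where e1: "endpts G c1 = {y1,t1}" "y1 \<in> Y" "t1 \<notin> Y" "t1 \<in> verts G"
    by (rule cut_edge_ends[OF wf c1C]) auto
  obtain y2 t2 where e2: "endpts G c2' = {y2,t2}" "y2 \<in> Y" "t2 \<notin> Y" "t2 \<in> verts G"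
    by (rule cut_edge_ends[OF wf c2C]) auto
  have "Ys = (endpts G c1 \<inter> Y) \<union> (endpts G c2' \<inter> Y)" unfolding Ys_def C12(1) by simp
  also have "\<dots> = {y1, y2}" using e1 e2 by auto
  finally have "Ys = {y1, y2}" .
  hence y12: "y1 \<noteq> y2" using cYs2 by auto
  have "Ts = (endpts G c1 \<inter> (verts G - Y)) \<union> (endpts G c2' \<inter> (verts G - Y))"
    unfolding Ts_def cut_compl[OF wf] C12(1) by simp
  also have "\<dots> = {t1, t2}" using e1 e2 Y(1) by auto
  finally have "Ts = {t1, t2}" .
  hence t12: "t1 \<noteq> t2" using cTs2 by auto
  show False
  proof (rule sep[OF kc, of "{y1,t2}" "{y2}" y2 t1])
    show "{y1, t2} \<subseteq> verts G" using e1 e2 Y by auto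
    show "card {y1, t2} \<le> 2" by (cases "y1 = t2") auto
    show "{y2} \<subseteq> verts G - {y1, t2}" using e2 y12 Y by auto
    show "y2 \<in> {y2}" by simp
    show "t1 \<in> verts G - {y1, t2} - {y2}" using e1 e2 t12 by auto
    fix e assume e: "e \<in> edges G" "endpts G e \<inter> {y2} \<noteq> {}"
    show "endpts G e \<subseteq> {y2} \<union> {y1, t2}"
    proof (cases "endpts G e \<subseteq> Y")
      case True
      have fY: "finite Y" using fV Y(1) finite_subset by blast
      have "{y1,y2} \<subseteq> Y" using e1 e2 by auto
      moreover have "card {y1,y2} = card Y" using cY y12 by simp
      ultimately have "Y = {y1,y2}" using card_subset_eq[OF fY] by blast
      thus ?thesis using True by auto
    next
      case False
      hence "e \<in> ?C" using meets_not_sub_cut[OF wf e(1)] e(2) e2(2) by blast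
      hence "e = c1 \<or> e = c2'" using C12 by auto
      thus ?thesis using e(2) e1 e2 y12 by auto
    qed
  qed
qed




definition cmap :: "'v set \<Rightarrow> 'v \<Rightarrow> 'v option" where
  "cmap X v = (if v \<in> X then None else Some v)"

lemma contract_simps[simp]:
  "verts (contract G X) = insert None (Some ` (verts G - X))"
  "edges (contract G X) = {e \<in> edges G. \<not> endpts G e \<subseteq> X}"
  "endpts (contract G X) e = cmap X ` endpts G e"
  by (simp_all add: contract_def cmap_def)

lemma cmap_simps[simp]: "v \<in> X \<Longrightarrow> cmap X v = None" "v \<notin> X \<Longrightarrow> cmap X v = Some v"
  by (simp_all add: cmap_def)

lemma wf_contract:
  assumes wf: "wf_graph G"
  shows "wf_graph (contract G X)"
  unfolding wf_graph_def
proof (intro conjI ballI)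
  show "finite (verts (contract G X))" using wf_finite_verts[OF wf] by simp
  show "finite (edges (contract G X))" using wf_finite_edges[OF wf] by simp
  fix e assume e: "e \<in> edges (contract G X)"
  hence eG: "e \<in> edges G" and nX: "\<not> endpts G e \<subseteq> X" by auto
  obtain u v where uv: "endpts G e = {u,v}" "u \<noteq> v" "u \<in> verts G" "v \<in> verts G"
    using wf_two[OF wf eG] by blast
  show "endpts (contract G X) e \<subseteq> verts (contract G X)"
    using uv by (auto simp: cmap_def)
  show "card (endpts (contract G X) e) = 2"
    using uv nX by (cases "u \<in> X"; cases "v \<in> X") auto
qed

lemma card_contract_verts:
  assumes "wf_graph G"
  shows "card (verts (contract G X)) = card (verts G - X) + 1"
proof -
  have "finite (verts G - X)" using wf_finite_verts[OF assms] by simp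
  moreover have "None \<notin> Some ` (verts G - X)" by auto
  ultimately show ?thesis by (simp add: card_image)
qed

lemma cubic_contract:
  assumes cub: "cubic G" and XV: "X \<subseteq> verts G" and c3: "card (cut G X) = 3"
  shows "cubic (contract G X)"
proof -
  have wf: "wf_graph G" using cub by (simp add: cubic_def)
  have "degree (contract G X) p = 3" if p: "p \<in> verts (contract G X)" for p
  proof (cases p)
    case None
    have "{e \<in> edges (contract G X). p \<in> endpts (contract G X) e} = cut G X"
    proof (intro set_eqI iffI)
      fix e assume "e \<in> {e \<in> edges (contract G X). p \<in> endpts (contract G X) e}"
      hence e: "e \<in> edges G" "\<not> endpts G e \<subseteq> X" "None \<in> cmap X ` endpts G e" using None by auto
      hence "endpts G e \<inter> X \<noteq> {}" by (auto simp: cmap_def split: if_splits)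
      thus "e \<in> cut G X" using meets_not_sub_cut[OF wf e(1)] e(2) by blast
    next
      fix e assume e: "e \<in> cut G X"
      obtain y t where "endpts G e = {y,t}" "y \<in> X" "t \<notin> X" by (rule cut_edge_ends[OF wf e]) auto
      thus "e \<in> {e \<in> edges (contract G X). p \<in> endpts (contract G X) e}"
        using e None by (auto simp: cut_def)
    qed
    thus ?thesis using c3 by (simp add: degree_def)
  next
    case (Some v)
    hence v: "v \<in> verts G" "v \<notin> X" using p by auto
    have "{e \<in> edges (contract G X). p \<in> endpts (contract G X) e} = {e \<in> edges G. v \<in> endpts G e}"
      using v Some by (auto simp: cmap_def split: if_splits)
    thus ?thesis using cub v by (simp add: degree_def cubic_def)
  qed
  thus ?thesis using wf_contract[OF wf] by (simp add: cubic_def)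
qed

lemma contract_adj:
  assumes wf: "wf_graph G" and e: "e \<in> edges G" "endpts G e = {y,z}"
    and nS: "cmap X y \<notin> S" "cmap X z \<notin> S"
  shows "(cmap X y, cmap X z) \<in> (adj_rel (del_verts (contract G X) S))\<^sup>*"
proof (cases "endpts G e \<subseteq> X")
  case True
  thus ?thesis using e by auto
next
  case False
  hence "e \<in> edges (del_verts (contract G X) S)" using e nS by auto
  moreover have "endpts (del_verts (contract G X) S) e = {cmap X y, cmap X z}" using e by simp
  ultimately have "(cmap X y, cmap X z) \<in> adj_rel (del_verts (contract G X) S)"
    unfolding adj_rel_def by blast
  thus ?thesis by blast
qed

lemma conn_case1:
  assumes kc: "k_connected 3 G" and XV: "X \<subseteq> verts G" and Xne: "X \<noteq> {}"
    and S: "S \<subseteq> verts (contract G X)" "card S < 3" "None \<notin> S"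
  shows "connected_graph (del_verts (contract G X) S)"
proof -
  have wf: "wf_graph G" using kc by (rule kconn_wf)
  define S0 where "S0 = {v. Some v \<in> S}"
  have SS0: "S = Some ` S0"
  proof
    show "S \<subseteq> Some ` S0"
    proof
      fix s assume s: "s \<in> S"
      then obtain v where "s = Some v" using S(3) by (cases s) auto
      thus "s \<in> Some ` S0" using s unfolding S0_def by auto
    qed
    show "Some ` S0 \<subseteq> S" unfolding S0_def by auto
  qed
  have S0V: "S0 \<subseteq> verts G - X" using S(1) unfolding S0_def by auto
  have "card S0 = card S" unfolding SS0 by (simp add: card_image)
  hence "card S0 < 3" using S by simp
  hence conn: "connected_graph (del_verts G S0)" using kc S0V unfolding k_connected_def by auto
  obtain x0 where x0: "x0 \<in> X" using Xne by blast
  let ?K = "del_verts (contract G X) S"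
  have map: "(cmap X u, cmap X v) \<in> (adj_rel ?K)\<^sup>*" if "(u,v) \<in> (adj_rel (del_verts G S0))\<^sup>*" for u v
    using that
  proof (induction rule: rtrancl_induct)
    case base thus ?case by simp
  next
    case (step y z)
    then obtain e where e: "e \<in> edges G" "endpts G e \<inter> S0 = {}" "endpts G e = {y,z}"
      unfolding adj_rel_def by auto
    have "cmap X y \<notin> S" "cmap X z \<notin> S" using e(2,3) S(3) unfolding SS0
      by (auto simp: cmap_def)
    hence "(cmap X y, cmap X z) \<in> (adj_rel ?K)\<^sup>*" using contract_adj[OF wf e(1,3)] by blast
    thus ?case by (rule rtrancl_trans[OF step(3)])
  qed
  show ?thesis
  proof (rule root_conn[of None])
    show "None \<in> verts ?K" using S(3) by simp
    fix p assume p: "p \<in> verts ?K"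
    show "(None, p) \<in> (adj_rel ?K)\<^sup>*"
    proof (cases p)
      case None thus ?thesis by simp
    next
      case (Some v)
      hence v: "v \<in> verts G - X - S0" using p unfolding SS0 by auto
      have "x0 \<in> verts (del_verts G S0)" "v \<in> verts (del_verts G S0)" using x0 XV S0V v by auto
      hence "(x0, v) \<in> (adj_rel (del_verts G S0))\<^sup>*" using conn unfolding connected_graph_def by blast
      from map[OF this] show ?thesis using x0 v Some by simp
    qed
  qed
qed

lemma conn_case2_aux:
  assumes kc: "k_connected 3 G" and XV: "X \<subseteq> verts G" and cX: "card X \<ge> 2"
    and S0: "S0 \<subseteq> verts G - X" "card S0 \<le> 1"
    and Z: "Z \<subseteq> verts G - X - S0" "z0 \<in> Z"
    and cl: "\<And>e z q. e \<in> edges G \<Longrightarrow> endpts G e = {z,q} \<Longrightarrow> z \<in> Z \<Longrightarrow> q \<in> verts G - X - S0 \<Longrightarrow> q \<in> Z"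
    and cZ: "card {e \<in> cut G X. endpts G e \<inter> Z \<noteq> {}} \<le> 1"
  shows False
proof -
  have wf: "wf_graph G" using kc by (rule kconn_wf)
  let ?CZ = "{e \<in> cut G X. endpts G e \<inter> Z \<noteq> {}}"
  define T where "T = (\<Union>e\<in>?CZ. endpts G e \<inter> X)"
  have fC: "finite ?CZ" using wf_finite_edges[OF wf] by (simp add: cut_def)
  have "card T \<le> (\<Sum>e\<in>?CZ. card (endpts G e \<inter> X))" unfolding T_def by (rule card_UN_le[OF fC])
  also have "\<dots> = card ?CZ" by (simp add: cut_def)
  finally have cT: "card T \<le> 1" using cZ by simp
  have fX: "finite X" using XV wf_finite_verts[OF wf] finite_subset by blast
  have TX: "T \<subseteq> X" unfolding T_def by blast
  have fT: "finite T" using TX fX finite_subset by blast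
  have fS0: "finite S0" using S0(1) wf_finite_verts[OF wf] finite_subset by blast
  have "card T < card X" using cT cX by simp
  hence "\<not> X \<subseteq> T" using card_mono[OF fT, of X] by linarith
  then obtain x where x: "x \<in> X" "x \<notin> T" by blast
  have cS': "card (S0 \<union> T) \<le> 2"
    using card_Un_le[of S0 T] S0(2) cT by simp
  show False
  proof (rule sep[OF kc _ cS', of Z z0 x])
    show "S0 \<union> T \<subseteq> verts G" using S0 TX XV by auto
    show "Z \<subseteq> verts G - (S0 \<union> T)" using Z TX by auto
    show "z0 \<in> Z" by fact
    show "x \<in> verts G - (S0 \<union> T) - Z" using x XV S0 Z by auto
    fix e assume e: "e \<in> edges G" "endpts G e \<inter> Z \<noteq> {}"
    then obtain z where z: "z \<in> endpts G e" "z \<in> Z" by blast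
    obtain u v where uv: "endpts G e = {u,v}" "u \<noteq> v" "u \<in> verts G" "v \<in> verts G"
      using wf_two[OF wf e(1)] by blast
    obtain q where eo: "endpts G e = {z,q}" "q \<in> verts G"
    proof (cases "z = u")
      case True thus ?thesis using that[of v] uv by simp
    next
      case False hence "z = v" using uv z(1) by auto
      thus ?thesis using that[of u] uv by (simp add: insert_commute)
    qed
    show "endpts G e \<subseteq> Z \<union> (S0 \<union> T)"
    proof (cases "q \<in> X")
      case True
      have "z \<notin> X" using z Z by auto
      hence "card (endpts G e \<inter> X) = 1" using True eo by (simp add: Int_insert_left)
      hence "e \<in> ?CZ" using e unfolding cut_def by auto
      hence "q \<in> T" unfolding T_def using True eo by blast
      thus ?thesis using eo z by auto
    next
      case False
      show ?thesis
      proof (cases "q \<in> S0")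
        case True thus ?thesis using eo z by auto
      next
        case False
        hence "q \<in> Z" using cl[OF e(1) eo(1) z(2)] \<open>q \<notin> X\<close> eo(2) by blast
        thus ?thesis using eo z by auto
      qed
    qed
  qed
qed

lemma conn_case2:
  assumes kc: "k_connected 3 G" and XV: "X \<subseteq> verts G" and cX: "card X \<ge> 2"
    and cXc: "card (verts G - X) \<ge> 3" and c3: "card (cut G X) \<le> 3"
    and S: "S \<subseteq> verts (contract G X)" "card S < 3" "None \<in> S"
  shows "connected_graph (del_verts (contract G X) S)"
proof -
  have wf: "wf_graph G" using kc by (rule kconn_wf)
  define S0 where "S0 = {v. Some v \<in> S}"
  have SS0: "S = insert None (Some ` S0)"
  proof
    show "S \<subseteq> insert None (Some ` S0)"
    proof
      fix s assume s: "s \<in> S"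
      show "s \<in> insert None (Some ` S0)"
      proof (cases s)
        case None thus ?thesis by simp
      next
        case (Some v) thus ?thesis using s unfolding S0_def by auto
      qed
    qed
    show "insert None (Some ` S0) \<subseteq> S" unfolding S0_def using S(3) by auto
  qed
  have S0V: "S0 \<subseteq> verts G - X" using S(1) unfolding S0_def by auto
  have fS0: "finite S0" using S0V wf_finite_verts[OF wf] finite_subset by blast
  have "card S = card S0 + 1" unfolding SS0 using fS0 by (simp add: card_image)
  hence cS0: "card S0 \<le> 1" using S by simp
  let ?K = "del_verts (contract G X) S"
  let ?R = "verts G - X - S0"
  have vK: "verts ?K = Some ` ?R" unfolding SS0 by auto
  have "card ?R \<ge> 2"
  proof -
    have "card (verts G - X - S0) \<ge> card (verts G - X) - card S0" by (rule diff_card_le_card_Diff[OF fS0])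
    thus ?thesis using cXc cS0 by simp
  qed
  then obtain r where r: "r \<in> ?R" by (metis all_not_in_conv card.empty not_numeral_le_zero)
  have adj: "(Some z, Some q) \<in> adj_rel ?K" if "e \<in> edges G" "endpts G e = {z,q}" "z \<in> ?R" "q \<in> ?R" for e z q
  proof -
    have "e \<in> edges ?K" using that SS0 by auto
    moreover have "endpts ?K e = {Some z, Some q}" using that by auto
    ultimately show ?thesis unfolding adj_rel_def by blast
  qed
  define A where "A = {v \<in> ?R. (Some r, Some v) \<in> (adj_rel ?K)\<^sup>*}"
  have RA: "?R \<subseteq> A"
  proof (rule ccontr)
    assume "\<not> ?R \<subseteq> A"
    then obtain b where b: "b \<in> ?R - A" by blast
    let ?B = "?R - A"
    have clA: "q \<in> A" if "e \<in> edges G" "endpts G e = {z,q}" "z \<in> A" "q \<in> ?R" for e z q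
    proof -
      have "(Some z, Some q) \<in> adj_rel ?K" using adj that A_def by auto
      thus ?thesis using that(3,4) unfolding A_def by (auto intro: rtrancl_into_rtrancl)
    qed
    have clB: "q \<in> ?B" if "e \<in> edges G" "endpts G e = {z,q}" "z \<in> ?B" "q \<in> ?R" for e z q
    proof (rule ccontr)
      assume "q \<notin> ?B"
      hence "q \<in> A" using that(4) by blast
      moreover have "endpts G e = {q,z}" using that(2) by (simp add: insert_commute)
      ultimately have "z \<in> A" using clA[OF that(1)] that(3) by blast
      thus False using that(3) by blast
    qed
    have rA: "r \<in> A" unfolding A_def using r by simp
    let ?CA = "{e \<in> cut G X. endpts G e \<inter> A \<noteq> {}}"
    let ?CB = "{e \<in> cut G X. endpts G e \<inter> ?B \<noteq> {}}"
    have disj: "?CA \<inter> ?CB = {}"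
    proof (rule ccontr)
      assume "?CA \<inter> ?CB \<noteq> {}"
      then obtain e a b' where e: "e \<in> cut G X" "a \<in> endpts G e" "a \<in> A" "b' \<in> endpts G e" "b' \<in> ?B" by blast
      have ab: "a \<noteq> b'" using e by blast
      have "e \<in> edges G" using e(1) by (simp add: cut_def)
      obtain u v where uv: "endpts G e = {u,v}" "u \<noteq> v" using wf_two[OF wf \<open>e \<in> edges G\<close>] by blast
      hence "endpts G e = {a,b'}" using e(2,4) ab by auto
      hence "card (endpts G e \<inter> X) = 0" using e A_def by auto
      thus False using e(1) by (simp add: cut_def)
    qed
    have fcut: "finite (cut G X)" using wf_finite_edges[OF wf] by (simp add: cut_def)
    have "card ?CA + card ?CB = card (?CA \<union> ?CB)"
      using disj fcut by (intro card_Un_disjoint[symmetric]) auto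
    also have "\<dots> \<le> card (cut G X)" using fcut by (intro card_mono) auto
    finally have "card ?CA \<le> 1 \<or> card ?CB \<le> 1" using c3 by linarith
    thus False
    proof
      assume "card ?CA \<le> 1"
      show False
        by (rule conn_case2_aux[OF kc XV cX S0V cS0, of A r]) (use A_def rA clA \<open>card ?CA \<le> 1\<close> in auto)
    next
      assume "card ?CB \<le> 1"
      show False
        by (rule conn_case2_aux[OF kc XV cX S0V cS0, of ?B b]) (use b clB \<open>card ?CB \<le> 1\<close> in auto)
    qed
  qed
  show ?thesis
  proof (rule root_conn[of "Some r"])
    show "Some r \<in> verts ?K" using vK r by simp
    fix p assume "p \<in> verts ?K"
    then obtain v where "p = Some v" "v \<in> ?R" using vK by auto
    thus "(Some r, p) \<in> (adj_rel ?K)\<^sup>*" using RA unfolding A_def by auto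
  qed
qed

lemma kconn_contract:
  assumes kc: "k_connected 3 G" and XV: "X \<subseteq> verts G" and cX: "card X \<ge> 2"
    and cXc: "card (verts G - X) \<ge> 3" and c3: "card (cut G X) \<le> 3"
  shows "k_connected 3 (contract G X)"
proof -
  have wf: "wf_graph G" using kc by (rule kconn_wf)
  have Xne: "X \<noteq> {}" using cX by auto
  show ?thesis unfolding k_connected_def
  proof (intro conjI allI impI)
    show "wf_graph (contract G X)" by (rule wf_contract[OF wf])
    show "3 < card (verts (contract G X))" using card_contract_verts[OF wf, of X] cXc by simp
    fix S assume S: "S \<subseteq> verts (contract G X) \<and> card S < 3"
    show "connected_graph (del_verts (contract G X) S)"
    proof (cases "None \<in> S")
      case True thus ?thesis using conn_case2[OF kc XV cX cXc c3] S by blast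
    next
      case False thus ?thesis using conn_case1[OF kc XV Xne] S by blast
    qed
  qed
qed




lemma hall:
  fixes L :: "'a set" and R :: "'b set" and rel :: "'a \<Rightarrow> 'b \<Rightarrow> bool"
  assumes "finite L" "finite R" "\<And>S. S \<subseteq> L \<Longrightarrow> card S \<le> card {r\<in>R. \<exists>s\<in>S. rel s r}"
  shows "\<exists>h. inj_on h L \<and> (\<forall>l\<in>L. h l \<in> R \<and> rel l (h l))"
  using assms
proof (induction "card L" arbitrary: L R rule: less_induct)
  case less
  note fL = less.prems(1) and fR = less.prems(2) and H = less.prems(3)
  let ?N = "\<lambda>S. {r\<in>R. \<exists>s\<in>S. rel s r}"
  show ?case
  proof (cases "L = {}")
    case True thus ?thesis by simp
  next
    case Lne: False
    show ?thesis
    proof (cases "\<forall>S. S \<subseteq> L \<and> S \<noteq> {} \<and> S \<noteq> L \<longrightarrow> card S < card (?N S)")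
      case True
      obtain l where l: "l \<in> L" using Lne by blast
      have c1: "card {l} \<le> card (?N {l})" using H[of "{l}"] l by blast
      have "?N {l} \<noteq> {}"
      proof
        assume e: "?N {l} = {}"
        have "card (?N {l}) = 0" unfolding e by simp
        with c1 show False by simp
      qed
      then obtain r where r: "r \<in> R" "rel l r" by blast
      let ?L' = "L - {l}" and ?R' = "R - {r}"
      have "card ?L' < card L" by (rule card_Diff1_less[OF fL l])
      moreover have "finite ?L'" "finite ?R'" using fL fR by auto
      moreover have "card S \<le> card {r'\<in>?R'. \<exists>s\<in>S. rel s r'}" if S: "S \<subseteq> ?L'" for S
      proof (cases "S = {}")
        case True thus ?thesis by simp
      next
        case False
        have "S \<noteq> L" using S l by auto
        hence lt: "card S < card (?N S)" using True S False by auto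
        have "{r'\<in>?R'. \<exists>s\<in>S. rel s r'} = ?N S - {r}" by auto
        moreover have "card (?N S - {r}) \<ge> card (?N S) - 1"
          by (simp add: card_Diff_singleton_if)
        ultimately show ?thesis using lt by simp
      qed
      ultimately have "\<exists>h. inj_on h ?L' \<and> (\<forall>x\<in>?L'. h x \<in> ?R' \<and> rel x (h x))"
        by (intro less.hyps) auto
      then obtain h' where h': "inj_on h' ?L'" "\<forall>x\<in>?L'. h' x \<in> ?R' \<and> rel x (h' x)"
        by blast
      define h where "h = h'(l := r)"
      have "inj_on h L"
      proof (rule inj_onI)
        fix x y assume xy: "x \<in> L" "y \<in> L" "h x = h y"
        show "x = y"
        proof (cases "x = l"; cases "y = l")
          assume "x \<noteq> l" "y \<noteq> l"
          thus ?thesis using xy h'(1) unfolding h_def by (auto dest: inj_onD)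
        next
          assume a: "x = l" "y \<noteq> l"
          hence "h y \<noteq> r" using xy h'(2) unfolding h_def by auto
          moreover have "h x = r" using a unfolding h_def by simp
          ultimately show ?thesis using xy by simp
        next
          assume a: "x \<noteq> l" "y = l"
          hence "h x \<noteq> r" using xy h'(2) unfolding h_def by auto
          moreover have "h y = r" using a unfolding h_def by simp
          ultimately show ?thesis using xy by simp
        qed simp
      qed
      moreover have "\<forall>x\<in>L. h x \<in> R \<and> rel x (h x)" using h'(2) r unfolding h_def by auto
      ultimately show ?thesis by blast
    next
      case False
      then obtain S0 where S0': "S0 \<subseteq> L" "S0 \<noteq> {}" "S0 \<noteq> L" "\<not> card S0 < card (?N S0)" by blast
      hence S0: "S0 \<subseteq> L" "S0 \<noteq> {}" "S0 \<noteq> L" "card (?N S0) \<le> card S0" by auto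
      hence eqS0: "card (?N S0) = card S0" using H[of S0] by simp
      have fS0: "finite S0" using S0(1) fL finite_subset by blast
      have "card S0 < card L" using S0 by (intro psubset_card_mono[OF fL]) auto
      moreover have "card S \<le> card {r\<in>R. \<exists>s\<in>S. rel s r}" if "S \<subseteq> S0" for S
        using H that S0(1) by blast
      ultimately have "\<exists>h. inj_on h S0 \<and> (\<forall>x\<in>S0. h x \<in> R \<and> rel x (h x))"
        using fS0 fR by (intro less.hyps) auto
      then obtain h1 where h1: "inj_on h1 S0" "\<forall>x\<in>S0. h1 x \<in> R \<and> rel x (h1 x)" by blast
      have im1: "h1 ` S0 \<subseteq> ?N S0" using h1(2) by auto
      have "card (h1 ` S0) = card S0" using card_image[OF h1(1)] .
      hence im1eq: "h1 ` S0 = ?N S0" using card_subset_eq[of "?N S0" "h1 ` S0"] im1 eqS0 fR by auto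
      let ?L2 = "L - S0" and ?R2 = "R - ?N S0"
      have "card ?L2 = card L - card S0" using card_Diff_subset[OF fS0 S0(1)] .
      moreover have "card S0 > 0" using fS0 S0(2) by auto
      moreover have "card S0 \<le> card L" using card_mono[OF fL S0(1)] .
      ultimately have "card ?L2 < card L" by linarith
      moreover have "finite ?L2" "finite ?R2" using fL fR by auto
      moreover have "card S \<le> card {r\<in>?R2. \<exists>s\<in>S. rel s r}" if S: "S \<subseteq> ?L2" for S
      proof -
        have fS: "finite S" using S fL finite_subset by blast
        have disj: "S \<inter> S0 = {}" using S by auto
        have "card S + card S0 = card (S \<union> S0)" using card_Un_disjoint[OF fS fS0 disj] by simp
        also have "\<dots> \<le> card (?N (S \<union> S0))" using S S0(1) by (intro H) auto
        also have "?N (S \<union> S0) = {r\<in>?R2. \<exists>s\<in>S. rel s r} \<union> ?N S0" by auto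
        also have "card \<dots> \<le> card {r\<in>?R2. \<exists>s\<in>S. rel s r} + card (?N S0)" by (rule card_Un_le)
        finally show ?thesis using eqS0 by simp
      qed
      ultimately have "\<exists>h. inj_on h ?L2 \<and> (\<forall>x\<in>?L2. h x \<in> ?R2 \<and> rel x (h x))"
        by (intro less.hyps) auto
      then obtain h2 where h2: "inj_on h2 ?L2" "\<forall>x\<in>?L2. h2 x \<in> ?R2 \<and> rel x (h2 x)" by blast
      define h where "h = (\<lambda>x. if x \<in> S0 then h1 x else h2 x)"
      have "inj_on h L"
      proof (rule inj_onI)
        fix x y assume xy: "x \<in> L" "y \<in> L" "h x = h y"
        show "x = y"
        proof (cases "x \<in> S0"; cases "y \<in> S0")
          assume "x \<in> S0" "y \<in> S0"
          thus ?thesis using xy h1(1) unfolding h_def by (auto dest: inj_onD)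
        next
          assume "x \<notin> S0" "y \<notin> S0"
          thus ?thesis using xy h2(1) unfolding h_def by (auto dest: inj_onD)
        next
          assume a: "x \<in> S0" "y \<notin> S0"
          hence "h x \<in> ?N S0" using im1 unfolding h_def by auto
          moreover have "h y \<notin> ?N S0" using a xy(2) h2(2) unfolding h_def by auto
          ultimately show ?thesis using xy by simp
        next
          assume a: "x \<notin> S0" "y \<in> S0"
          hence "h y \<in> ?N S0" using im1 unfolding h_def by auto
          moreover have "h x \<notin> ?N S0" using a xy(1) h2(2) unfolding h_def by auto
          ultimately show ?thesis using xy by simp
        qed
      qed
      moreover have "\<forall>x\<in>L. h x \<in> R \<and> rel x (h x)" using h1(2) h2(2) unfolding h_def by auto
      ultimately show ?thesis by blast
    qed
  qed
qed




lemma cut_subset_edges: "cut G Y \<subseteq> edges G" by (auto simp: cut_def)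

lemma cut_count:
  assumes cub: "cubic K" and e12: "\<epsilon>1 \<in> edges K" "\<epsilon>2 \<in> edges K" "\<epsilon>1 \<noteq> \<epsilon>2"
    and bip: "bipartition (del_edges K {\<epsilon>1,\<epsilon>2}) P Q"
    and eP: "endpts K \<epsilon>1 \<subseteq> P" and eQ: "endpts K \<epsilon>2 \<subseteq> Q"
    and SP: "S \<subseteq> P"
    and T: "T = {q\<in>Q. \<exists>e\<in>edges K - {\<epsilon>1,\<epsilon>2}. \<exists>s\<in>S. endpts K e = {s,q}}"
  shows "int (card (cut K (S \<union> T))) = 3 * (int (card T) - int (card S))
      + int (card (endpts K \<epsilon>1 \<inter> S)) + (if card (endpts K \<epsilon>1 \<inter> S) = 1 then 1 else 0)
      - int (card (endpts K \<epsilon>2 \<inter> T)) + (if card (endpts K \<epsilon>2 \<inter> T) = 1 then 1 else 0)"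
proof -
  have wf: "wf_graph K" using cub by (simp add: cubic_def)
  have PQ: "P \<inter> Q = {}" "P \<union> Q = verts K" using bip by (auto simp: bipartition_def)
  have TQ: "T \<subseteq> Q" using T by auto
  have SV: "S \<subseteq> verts K" "T \<subseteq> verts K" using SP TQ PQ by auto
  let ?c1 = "card (endpts K \<epsilon>1 \<inter> S)" and ?c2 = "card (endpts K \<epsilon>2 \<inter> T)"
  define d where "d = (\<lambda>e. if e = \<epsilon>1 then int ?c1 + (if ?c1 = 1 then 1 else 0)
     else if e = \<epsilon>2 then - int ?c2 + (if ?c2 = 1 then 1 else 0) else 0)"
  let ?ct = "\<lambda>e. if e \<in> cut K (S \<union> T) then 1 else 0 :: int"
  have pe: "int (card (endpts K e \<inter> S)) + ?ct e = int (card (endpts K e \<inter> T)) + d e"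
    if e: "e \<in> edges K" for e
  proof (cases "e = \<epsilon>1")
    case True
    have "endpts K e \<inter> T = {}" using True eP TQ PQ by auto
    moreover have "endpts K e \<inter> (S \<union> T) = endpts K e \<inter> S" using True eP TQ PQ by auto
    ultimately show ?thesis using True e12 e unfolding d_def cut_def by auto
  next
    case n1: False
    show ?thesis
    proof (cases "e = \<epsilon>2")
      case True
      have "endpts K e \<inter> S = {}" using True eQ SP PQ by auto
      moreover have "endpts K e \<inter> (S \<union> T) = endpts K e \<inter> T" using True eQ SP PQ by auto
      ultimately show ?thesis using True e12 e unfolding d_def cut_def by auto
    next
      case n2: False
      hence eH: "e \<in> edges K - {\<epsilon>1,\<epsilon>2}" using n1 e by auto
      have "\<exists>p\<in>P. \<exists>q\<in>Q. endpts K e = {p,q}"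
        using bip eH unfolding bipartition_def by simp
      then obtain p q where pq: "p \<in> P" "q \<in> Q" "endpts K e = {p,q}" by blast
      have pq': "p \<notin> T" "q \<notin> S" "p \<noteq> q" using pq TQ SP PQ by auto
      have imp: "p \<in> S \<Longrightarrow> q \<in> T" using pq eH T by auto
      have dz: "d e = 0" using n1 n2 unfolding d_def by simp
      have cS: "card (endpts K e \<inter> S) = (if p \<in> S then 1 else 0)" using pq pq' by auto
      have cT: "card (endpts K e \<inter> T) = (if q \<in> T then 1 else 0)" using pq pq' by auto
      have "card (endpts K e \<inter> (S \<union> T)) = (if p \<in> S then 1 else 0) + (if q \<in> T then 1 else 0)"
        using pq pq' by auto
      hence "e \<in> cut K (S \<union> T) \<longleftrightarrow> (p \<in> S) \<noteq> (q \<in> T)" using e unfolding cut_def by auto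
      thus ?thesis using cS cT dz imp by auto
    qed
  qed
  have fE: "finite (edges K)" using wf by (rule wf_finite_edges)
  have "(\<Sum>e\<in>edges K. int (card (endpts K e \<inter> S)) + ?ct e) = (\<Sum>e\<in>edges K. int (card (endpts K e \<inter> T)) + d e)"
    using pe by (rule sum.cong[OF refl])
  moreover have "(\<Sum>e\<in>edges K. int (card (endpts K e \<inter> S))) = 3 * int (card S)"
    using cubic_sum[OF cub SV(1)] by (simp flip: of_nat_sum)
  moreover have "(\<Sum>e\<in>edges K. int (card (endpts K e \<inter> T))) = 3 * int (card T)"
    using cubic_sum[OF cub SV(2)] by (simp flip: of_nat_sum)
  moreover have "(\<Sum>e\<in>edges K. ?ct e) = int (card (cut K (S \<union> T)))"
  proof -
    have "(\<Sum>e\<in>edges K. ?ct e) = (\<Sum>e\<in>edges K \<inter> cut K (S \<union> T). 1)"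
      using fE by (simp add: sum.If_cases Int_def)
    also have "edges K \<inter> cut K (S \<union> T) = cut K (S \<union> T)" using cut_subset_edges[of K "S \<union> T"] by (rule Int_absorb1)
    finally show ?thesis by simp
  qed
  moreover have "(\<Sum>e\<in>edges K. d e) = d \<epsilon>1 + d \<epsilon>2"
  proof -
    have "(\<Sum>e\<in>edges K. d e) = (\<Sum>e\<in>{\<epsilon>1,\<epsilon>2}. d e)"
      using fE e12 by (intro sum.mono_neutral_right) (auto simp: d_def)
    thus ?thesis using e12(3) by simp
  qed
  ultimately show ?thesis using e12(3) unfolding d_def by (simp add: sum.distrib)
qed




lemma no_deficiency:
  assumes kc: "k_connected 3 K" and cub: "cubic K" and e12: "\<epsilon>1 \<in> edges K" "\<epsilon>2 \<in> edges K" "\<epsilon>1 \<noteq> \<epsilon>2"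
    and bip: "bipartition (del_edges K {\<epsilon>1,\<epsilon>2}) P Q"
    and eP: "endpts K \<epsilon>1 \<subseteq> P" and eQ: "endpts K \<epsilon>2 \<subseteq> Q"
    and SP: "S \<subseteq> P" and Sne: "S \<noteq> {}"
    and T: "T = {q\<in>Q. \<exists>e\<in>edges K - {\<epsilon>1,\<epsilon>2}. \<exists>s\<in>S. endpts K e = {s,q}}"
    and a: "a \<in> verts K" "a \<notin> S \<union> T"
    and sz: "card T \<le> card S \<or> (card (endpts K \<epsilon>1 \<inter> S) = 0 \<and> card T \<le> card S + 1 \<and> card (endpts K \<epsilon>2 \<inter> T) = 2)"
  shows False
proof -
  have wf: "wf_graph K" using cub by (simp add: cubic_def)
  have PQ: "P \<inter> Q = {}" "P \<union> Q = verts K" using bip by (auto simp: bipartition_def)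
  have TQ: "T \<subseteq> Q" using T by auto
  have "S \<union> T \<subseteq> verts K" using SP TQ PQ by auto
  moreover have "S \<union> T \<noteq> {}" using Sne by auto
  moreover have "verts K - (S \<union> T) \<noteq> {}" using a by auto
  ultimately have ge3: "3 \<le> card (cut K (S \<union> T))" by (rule edge_conn3[OF kc])
  have eq: "int (card (cut K (S \<union> T))) = 3 * (int (card T) - int (card S))
      + int (card (endpts K \<epsilon>1 \<inter> S)) + (if card (endpts K \<epsilon>1 \<inter> S) = 1 then 1 else 0)
      - int (card (endpts K \<epsilon>2 \<inter> T)) + (if card (endpts K \<epsilon>2 \<inter> T) = 1 then 1 else 0)"
    by (rule cut_count[OF cub e12 bip eP eQ SP T])
  have c1: "card (endpts K \<epsilon>1 \<inter> S) \<le> 2" by (rule card_int_le2[OF wf e12(1)])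
  have c2: "card (endpts K \<epsilon>2 \<inter> T) \<le> 2" by (rule card_int_le2[OF wf e12(2)])
  show False using sz
  proof
    assume "card T \<le> card S"
    thus False using eq ge3 c1 c2 by (auto split: if_splits)
  next
    assume "card (endpts K \<epsilon>1 \<inter> S) = 0 \<and> card T \<le> card S + 1 \<and> card (endpts K \<epsilon>2 \<inter> T) = 2"
    thus False using eq ge3 by (auto split: if_splits)
  qed
qed

lemma pm_exist:
  fixes K :: "('w,'e) mgraph"
  assumes wf: "wf_graph K" and PQ: "P \<inter> Q = {}" "P \<union> Q = verts K"
    and A: "\<And>e. e \<in> A \<Longrightarrow> e \<in> edges K \<and> (\<exists>p\<in>P. \<exists>q\<in>Q. endpts K e = {p,q})"
    and D: "DP \<subseteq> P" "DQ \<subseteq> Q" "card (P - DP) = card (Q - DQ)"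
    and F: "F \<subseteq> edges K" "\<And>v. v \<in> DP \<union> DQ \<Longrightarrow> \<exists>!e. e \<in> F \<and> v \<in> endpts K e"
       "\<And>e. e \<in> F \<Longrightarrow> endpts K e \<subseteq> DP \<union> DQ"
    and hallc: "\<And>S. S \<subseteq> P - DP \<Longrightarrow> card S \<le> card {r\<in>Q - DQ. \<exists>s\<in>S. \<exists>e\<in>A. endpts K e = {s,r}}"
  shows "\<exists>M. perfect_matching K M \<and> F \<subseteq> M \<and> M \<subseteq> A \<union> F"
proof -
  have fV: "finite (verts K)" using wf by (rule wf_finite_verts)
  let ?L = "P - DP" and ?R = "Q - DQ"
  have LV: "?L \<subseteq> verts K" and RV: "?R \<subseteq> verts K" using PQ by auto
  have fL: "finite ?L" by (rule finite_subset[OF LV fV])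
  have fR: "finite ?R" by (rule finite_subset[OF RV fV])
  define rel where "rel = (\<lambda>s r. \<exists>e\<in>A. endpts K e = {s,r})"
  have hc: "\<And>S. S \<subseteq> ?L \<Longrightarrow> card S \<le> card {r\<in>?R. \<exists>s\<in>S. rel s r}"
    unfolding rel_def by (rule hallc)
  obtain h where h: "inj_on h ?L" "\<forall>l\<in>?L. h l \<in> ?R \<and> rel l (h l)"
    using hall[OF fL fR hc] by blast
  have hL: "h ` ?L = ?R"
  proof -
    have sub: "h ` ?L \<subseteq> ?R" using h(2) by auto
    moreover have "card (h ` ?L) = card ?R" using card_image[OF h(1)] D(3) by simp
    ultimately show ?thesis using card_subset_eq[OF fR sub] by simp
  qed
  define pk where "pk = (\<lambda>l. SOME e. e \<in> A \<and> endpts K e = {l, h l})"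
  have pk: "pk l \<in> A \<and> endpts K (pk l) = {l, h l}" if "l \<in> ?L" for l
  proof -
    have "\<exists>e. e \<in> A \<and> endpts K e = {l, h l}" using h(2) that unfolding rel_def by blast
    thus ?thesis unfolding pk_def by (rule someI_ex)
  qed
  define M where "M = F \<union> pk ` ?L"
  have pkA: "pk l \<in> A" and pkE: "endpts K (pk l) = {l, h l}" and hR: "h l \<in> ?R" if "l \<in> ?L" for l
    using pk[OF that] h(2) that by auto
  have MK: "M \<subseteq> edges K"
  proof
    fix e assume "e \<in> M"
    hence "e \<in> F \<or> (\<exists>l\<in>?L. e = pk l)" unfolding M_def by auto
    thus "e \<in> edges K" using F(1) pkA A by auto
  qed
  have uniq: "\<exists>!e. e \<in> M \<and> v \<in> endpts K e" if v: "v \<in> verts K" for v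
  proof (cases "v \<in> DP \<union> DQ")
    case True
    have "\<exists>!e. e \<in> F \<and> v \<in> endpts K e" using F(2)[OF True] .
    then obtain e0 where e0a: "e0 \<in> F \<and> v \<in> endpts K e0" and e0b: "\<forall>e. e \<in> F \<and> v \<in> endpts K e \<longrightarrow> e = e0"
      unfolding Ex1_def by blast
    have np: "v \<notin> endpts K (pk l)" if l: "l \<in> ?L" for l
    proof -
      have "h l \<in> ?R" using hR[OF l] .
      moreover have "l \<in> ?L" by fact
      ultimately show ?thesis unfolding pkE[OF l] using True D PQ by auto
    qed
    show ?thesis
    proof (rule ex1I[of _ e0])
      show "e0 \<in> M \<and> v \<in> endpts K e0" using e0a unfolding M_def by simp
      fix e assume e: "e \<in> M \<and> v \<in> endpts K e"
      hence "e \<in> F \<or> (\<exists>l\<in>?L. e = pk l)" unfolding M_def by auto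
      thus "e = e0" using e e0b np by auto
    qed
  next
    case nD: False
    show ?thesis
    proof (cases "v \<in> P")
      case True
      hence vL: "v \<in> ?L" using nD by auto
      show ?thesis
      proof (rule ex1I[of _ "pk v"])
        show "pk v \<in> M \<and> v \<in> endpts K (pk v)" using pkE[OF vL] vL unfolding M_def by simp
        fix e assume e: "e \<in> M \<and> v \<in> endpts K e"
        show "e = pk v"
        proof (cases "e \<in> F")
          case True thus ?thesis using F(3)[OF True] e nD by auto
        next
          case False
          then obtain l where l: "l \<in> ?L" "e = pk l" using e unfolding M_def by auto
          have "h l \<in> Q" using hR[OF l(1)] by simp
          hence "v \<noteq> h l" using \<open>v \<in> P\<close> PQ by auto
          moreover have "v \<in> {l, h l}" using pkE[OF l(1)] l(2) e by simp
          ultimately have "v = l" by simp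
          thus ?thesis using l by simp
        qed
      qed
    next
      case False
      hence vR: "v \<in> ?R" using v nD PQ by auto
      hence "v \<in> h ` ?L" using hL by simp
      then obtain l where l: "l \<in> ?L" "v = h l" by blast
      show ?thesis
      proof (rule ex1I[of _ "pk l"])
        show "pk l \<in> M \<and> v \<in> endpts K (pk l)" using pkE[OF l(1)] l unfolding M_def by simp
        fix e assume e: "e \<in> M \<and> v \<in> endpts K e"
        show "e = pk l"
        proof (cases "e \<in> F")
          case True thus ?thesis using F(3)[OF True] e nD by auto
        next
          case nF: False
          then obtain l' where l': "l' \<in> ?L" "e = pk l'" using e unfolding M_def by auto
          have "v \<noteq> l'" using l'(1) False by auto
          moreover have "v \<in> {l', h l'}" using pkE[OF l'(1)] l'(2) e by simp
          ultimately have "h l' = h l" using l(2) by simp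
          hence "l' = l" by (rule inj_onD[OF h(1) _ l'(1) l(1)])
          thus ?thesis using l' by simp
        qed
      qed
    qed
  qed
  have "perfect_matching K M" unfolding perfect_matching_def using MK uniq by blast
  moreover have "M \<subseteq> A \<union> F"
  proof
    fix e assume "e \<in> M"
    hence "e \<in> F \<or> (\<exists>l\<in>?L. e = pk l)" unfolding M_def by auto
    thus "e \<in> A \<union> F" using pkA by auto
  qed
  moreover have "F \<subseteq> M" unfolding M_def by simp
  ultimately show ?thesis by blast
qed




lemma wf_del_edges: "wf_graph G \<Longrightarrow> wf_graph (del_edges G F)"
  by (auto simp: wf_graph_def)

lemma pm_del_edges:
  "perfect_matching G M \<Longrightarrow> M \<subseteq> edges G - F \<Longrightarrow> perfect_matching (del_edges G F) M"
  by (simp add: perfect_matching_def)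

lemma pm_of_del_edges:
  "perfect_matching (del_edges G F) M \<Longrightarrow> perfect_matching G M \<and> M \<inter> F = {}"
  by (auto simp: perfect_matching_def)

lemma nb_hall_A:
  assumes kc: "k_connected 3 K" and cub: "cubic K" and e12: "\<epsilon>1 \<in> edges K" "\<epsilon>2 \<in> edges K" "\<epsilon>1 \<noteq> \<epsilon>2"
    and bip: "bipartition (del_edges K {\<epsilon>1,\<epsilon>2}) P Q"
    and eP: "endpts K \<epsilon>1 \<subseteq> P" and eQ: "endpts K \<epsilon>2 \<subseteq> Q"
    and a: "a \<in> P" and b: "b \<in> Q" and S: "S \<subseteq> P - {a}"
  shows "card S \<le> card {r\<in>Q - {b}. \<exists>s\<in>S. \<exists>e\<in>edges K - {\<epsilon>1,\<epsilon>2}. endpts K e = {s,r}}"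
proof (rule ccontr)
  let ?N = "{r\<in>Q - {b}. \<exists>s\<in>S. \<exists>e\<in>edges K - {\<epsilon>1,\<epsilon>2}. endpts K e = {s,r}}"
  define T where "T = {q\<in>Q. \<exists>e\<in>edges K - {\<epsilon>1,\<epsilon>2}. \<exists>s\<in>S. endpts K e = {s,q}}"
  assume "\<not> card S \<le> card ?N"
  hence lt: "card ?N < card S" by simp
  have wf: "wf_graph K" using cub by (simp add: cubic_def)
  have PQ: "P \<inter> Q = {}" "P \<union> Q = verts K" using bip by (auto simp: bipartition_def)
  have NV: "?N \<subseteq> verts K" using PQ by auto
  have fN: "finite ?N" by (rule finite_subset[OF NV wf_finite_verts[OF wf]])
  have "T \<subseteq> insert b ?N" unfolding T_def by auto
  hence "card T \<le> card (insert b ?N)" using fN by (intro card_mono) auto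
  also have "\<dots> \<le> card ?N + 1" using card_insert_if[OF fN, of b] by simp
  finally have cT: "card T \<le> card S" using lt by simp
  have Sne: "S \<noteq> {}" using lt by auto
  show False
  proof (rule no_deficiency[OF kc cub e12 bip eP eQ _ Sne T_def])
    show "S \<subseteq> P" using S by auto
    show "a \<in> verts K" using a PQ by auto
    show "a \<notin> S \<union> T" using a S PQ unfolding T_def by auto
    show "card T \<le> card S \<or> (card (endpts K \<epsilon>1 \<inter> S) = 0 \<and> card T \<le> card S + 1 \<and> card (endpts K \<epsilon>2 \<inter> T) = 2)"
      using cT by simp
  qed
qed

lemma nb_hall_B:
  assumes kc: "k_connected 3 K" and cub: "cubic K" and e12: "\<epsilon>1 \<in> edges K" "\<epsilon>2 \<in> edges K" "\<epsilon>1 \<noteq> \<epsilon>2"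
    and bip: "bipartition (del_edges K {\<epsilon>1,\<epsilon>2}) P Q"
    and eP: "endpts K \<epsilon>1 \<subseteq> P" and eQ: "endpts K \<epsilon>2 \<subseteq> Q"
    and S: "S \<subseteq> P - endpts K \<epsilon>1"
  shows "card S \<le> card {r\<in>Q - endpts K \<epsilon>2. \<exists>s\<in>S. \<exists>e\<in>edges K - {\<epsilon>1,\<epsilon>2}. endpts K e = {s,r}}"
proof (rule ccontr)
  let ?N = "{r\<in>Q - endpts K \<epsilon>2. \<exists>s\<in>S. \<exists>e\<in>edges K - {\<epsilon>1,\<epsilon>2}. endpts K e = {s,r}}"
  define T where "T = {q\<in>Q. \<exists>e\<in>edges K - {\<epsilon>1,\<epsilon>2}. \<exists>s\<in>S. endpts K e = {s,q}}"
  assume "\<not> card S \<le> card ?N"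
  hence lt: "card ?N < card S" by simp
  have wf: "wf_graph K" using cub by (simp add: cubic_def)
  have PQ: "P \<inter> Q = {}" "P \<union> Q = verts K" using bip by (auto simp: bipartition_def)
  have fV: "finite (verts K)" by (rule wf_finite_verts[OF wf])
  have NV: "?N \<subseteq> verts K" using PQ by auto
  have fN: "finite ?N" by (rule finite_subset[OF NV fV])
  have E2V: "endpts K \<epsilon>2 \<inter> T \<subseteq> verts K" using wf_endpts[OF wf e12(2)] by auto
  have fE2: "finite (endpts K \<epsilon>2 \<inter> T)" by (rule finite_subset[OF E2V fV])
  have "T \<subseteq> ?N \<union> (endpts K \<epsilon>2 \<inter> T)" unfolding T_def by auto
  hence "card T \<le> card (?N \<union> (endpts K \<epsilon>2 \<inter> T))" using fN fE2 by (intro card_mono) auto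
  also have "\<dots> \<le> card ?N + card (endpts K \<epsilon>2 \<inter> T)" by (rule card_Un_le)
  finally have cT: "card T < card S + card (endpts K \<epsilon>2 \<inter> T)" using lt by simp
  have c2: "card (endpts K \<epsilon>2 \<inter> T) \<le> 2" by (rule card_int_le2[OF wf e12(2)])
  have c1: "endpts K \<epsilon>1 \<inter> S = {}" using S by auto
  have Sne: "S \<noteq> {}" using lt by auto
  obtain u v where uv: "endpts K \<epsilon>1 = {u,v}" using wf_two[OF wf e12(1)] by blast
  show False
  proof (rule no_deficiency[OF kc cub e12 bip eP eQ _ Sne T_def])
    show "S \<subseteq> P" using S by auto
    show "u \<in> verts K" using uv eP PQ by auto
    show "u \<notin> S \<union> T" using uv eP S PQ unfolding T_def by auto
    show "card T \<le> card S \<or> (card (endpts K \<epsilon>1 \<inter> S) = 0 \<and> card T \<le> card S + 1 \<and> card (endpts K \<epsilon>2 \<inter> T) = 2)"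
      using cT c2 c1 by (cases "card (endpts K \<epsilon>2 \<inter> T) = 2") auto
  qed
qed




lemma near_bip_cubic:
  assumes kc: "k_connected 3 K" and cub: "cubic K" and e12: "\<epsilon>1 \<in> edges K" "\<epsilon>2 \<in> edges K" "\<epsilon>1 \<noteq> \<epsilon>2"
    and bip: "bipartition (del_edges K {\<epsilon>1,\<epsilon>2}) P Q"
    and eP: "endpts K \<epsilon>1 \<subseteq> P" and eQ: "endpts K \<epsilon>2 \<subseteq> Q" and cPQ: "card P = card Q"
  shows "near_bipartite_rd K \<epsilon>1 \<epsilon>2"
proof -
  let ?H = "del_edges K {\<epsilon>1,\<epsilon>2}"
  let ?A = "edges K - {\<epsilon>1,\<epsilon>2}"
  have wf: "wf_graph K" using cub by (simp add: cubic_def)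
  have PQ: "P \<inter> Q = {}" "P \<union> Q = verts K" using bip by (auto simp: bipartition_def)
  have fV: "finite (verts K)" by (rule wf_finite_verts[OF wf])
  have fP: "finite P" using PQ fV by (metis finite_Un)
  have fQ: "finite Q" using PQ fV by (metis finite_Un)
  have V4: "card (verts K) > 3" using kc by (simp add: k_connected_def)
  have Aedge: "e \<in> edges K \<and> (\<exists>p\<in>P. \<exists>q\<in>Q. endpts K e = {p,q})" if "e \<in> ?A" for e
    using that bip by (auto simp: bipartition_def)
  have admH: "admissible ?H e" if eA: "e \<in> edges ?H" for e
  proof -
    have eA': "e \<in> ?A" using eA by simp
    obtain a b where ab: "a \<in> P" "b \<in> Q" "endpts K e = {a,b}" using Aedge[OF eA'] by blast
    have anb: "a \<noteq> b" using ab PQ by auto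
    have "\<exists>M. perfect_matching K M \<and> {e} \<subseteq> M \<and> M \<subseteq> ?A \<union> {e}"
    proof (rule pm_exist[OF wf PQ Aedge])
      show "{a} \<subseteq> P" "{b} \<subseteq> Q" using ab by auto
      show "card (P - {a}) = card (Q - {b})" using ab fP fQ cPQ by simp
      show "{e} \<subseteq> edges K" using eA' by auto
      fix v assume "v \<in> {a} \<union> {b}"
      thus "\<exists>!e'. e' \<in> {e} \<and> v \<in> endpts K e'" using ab by auto
    next
      fix e' assume "e' \<in> {e}" thus "endpts K e' \<subseteq> {a} \<union> {b}" using ab by auto
    next
      fix S assume "S \<subseteq> P - {a}"
      thus "card S \<le> card {r\<in>Q - {b}. \<exists>s\<in>S. \<exists>e\<in>?A. endpts K e = {s,r}}"
        by (rule nb_hall_A[OF kc cub e12 bip eP eQ ab(1,2)])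
    qed
    then obtain M where M: "perfect_matching K M" "e \<in> M" "M \<subseteq> ?A" using eA' by auto
    have "perfect_matching ?H M" by (rule pm_del_edges[OF M(1,3)])
    thus ?thesis using M(2) unfolding admissible_def by blast
  qed
  have pm12: "\<exists>M. perfect_matching K M \<and> \<epsilon>1 \<in> M \<and> \<epsilon>2 \<in> M"
  proof -
    have c1: "card (endpts K \<epsilon>1) = 2" and c2: "card (endpts K \<epsilon>2) = 2"
      using wf_card2[OF wf] e12 by auto
    have "\<exists>M. perfect_matching K M \<and> {\<epsilon>1,\<epsilon>2} \<subseteq> M \<and> M \<subseteq> ?A \<union> {\<epsilon>1,\<epsilon>2}"
    proof (rule pm_exist[OF wf PQ Aedge])
      show "endpts K \<epsilon>1 \<subseteq> P" "endpts K \<epsilon>2 \<subseteq> Q" by fact+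
      show "card (P - endpts K \<epsilon>1) = card (Q - endpts K \<epsilon>2)"
        using card_Diff_subset[OF _ eP] card_Diff_subset[OF _ eQ] c1 c2 cPQ
          finite_subset[OF eP fP] finite_subset[OF eQ fQ] by simp
      show "{\<epsilon>1,\<epsilon>2} \<subseteq> edges K" using e12 by auto
      fix v assume v: "v \<in> endpts K \<epsilon>1 \<union> endpts K \<epsilon>2"
      show "\<exists>!e'. e' \<in> {\<epsilon>1,\<epsilon>2} \<and> v \<in> endpts K e'"
      proof (cases "v \<in> endpts K \<epsilon>1")
        case True
        hence "v \<notin> endpts K \<epsilon>2" using eP eQ PQ by auto
        thus ?thesis using True by auto
      next
        case False thus ?thesis using v by auto
      qed
    next
      fix e' assume "e' \<in> {\<epsilon>1,\<epsilon>2}" thus "endpts K e' \<subseteq> endpts K \<epsilon>1 \<union> endpts K \<epsilon>2" by auto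
    next
      fix S assume "S \<subseteq> P - endpts K \<epsilon>1"
      thus "card S \<le> card {r\<in>Q - endpts K \<epsilon>2. \<exists>s\<in>S. \<exists>e\<in>?A. endpts K e = {s,r}}"
        by (rule nb_hall_B[OF kc cub e12 bip eP eQ])
    qed
    thus ?thesis by auto
  qed
  have connH: "connected_graph ?H"
  proof -
    obtain r where r: "r \<in> verts K" using V4 by (metis card.empty ex_in_conv not_less_zero)
    define Y where "Y = {v \<in> verts K. (r,v) \<in> (adj_rel ?H)\<^sup>*}"
    have "verts K \<subseteq> Y"
    proof (rule ccontr)
      assume nY: "\<not> verts K \<subseteq> Y"
      have YV: "Y \<subseteq> verts K" unfolding Y_def by auto
      have "cut K Y \<subseteq> {\<epsilon>1,\<epsilon>2}"
      proof
        fix e assume e: "e \<in> cut K Y"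
        show "e \<in> {\<epsilon>1,\<epsilon>2}"
        proof (rule ccontr)
          assume ne: "e \<notin> {\<epsilon>1,\<epsilon>2}"
          obtain y t where yt: "endpts K e = {y,t}" "y \<in> Y" "t \<notin> Y" "t \<in> verts K"
            by (rule cut_edge_ends[OF wf e]) auto
          have "e \<in> edges ?H" using e ne by (auto simp: cut_def)
          hence "(y,t) \<in> adj_rel ?H" using yt unfolding adj_rel_def by auto
          hence "t \<in> Y" using yt(2,4) unfolding Y_def by (auto intro: rtrancl_into_rtrancl)
          thus False using yt(3) by simp
        qed
      qed
      hence "card (cut K Y) \<le> card {\<epsilon>1,\<epsilon>2}" by (intro card_mono) auto
      also have "\<dots> \<le> 2" by (simp add: card_insert_if)
      finally have "card (cut K Y) \<le> 2" .
      moreover have "3 \<le> card (cut K Y)"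
        by (rule edge_conn3[OF kc YV]) (use r nY Y_def in auto)
      ultimately show False by simp
    qed
    thus ?thesis
      by (intro root_conn[of r]) (use r Y_def in auto)
  qed
  have nbK: "\<not> bipartite K"
  proof
    assume "bipartite K"
    then obtain P2 Q2 where b2: "bipartition K P2 Q2" unfolding bipartite_def by blast
    have P2Q2: "P2 \<inter> Q2 = {}" using b2 by (simp add: bipartition_def)
    define f where "f = (\<lambda>v. (v \<in> P) = (v \<in> P2))"
    obtain r where r: "r \<in> verts K" using V4 by (metis card.empty ex_in_conv not_less_zero)
    have step: "f x = f y" if xyH: "(x,y) \<in> adj_rel ?H" for x y
    proof -
      obtain e where e: "e \<in> ?A" "endpts K e = {x,y}" using xyH unfolding adj_rel_def by auto
      obtain p q where pq: "p \<in> P" "q \<in> Q" "endpts K e = {p,q}" using Aedge[OF e(1)] by blast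
      obtain p2 q2 where pq2: "p2 \<in> P2" "q2 \<in> Q2" "endpts K e = {p2,q2}"
        using b2 e(1) unfolding bipartition_def by auto
      have "p \<noteq> q" using pq PQ by auto
      have "p2 \<noteq> q2" using pq2 P2Q2 by auto
      have xy: "{x,y} = {p,q}" "{x,y} = {p2,q2}" using e pq pq2 by auto
      show ?thesis using xy pq pq2 PQ P2Q2 unfolding f_def doubleton_eq_iff by blast
    qed
    have fr: "f v = f r" if "v \<in> verts K" for v
    proof -
      have "(r,v) \<in> (adj_rel ?H)\<^sup>*" using connH r that unfolding connected_graph_def by simp
      thus ?thesis
      proof (induction rule: rtrancl_induct)
        case base thus ?case by simp
      next
        case (step y z)
        have "f y = f z" by (rule \<open>\<And>x y. (x,y) \<in> adj_rel ?H \<Longrightarrow> f x = f y\<close>[OF step.hyps(2)])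
        thus ?case using step.IH by simp
      qed
    qed
    obtain u w where uw: "endpts K \<epsilon>1 = {u,w}" "u \<noteq> w" "u \<in> verts K" "w \<in> verts K"
      using wf_two[OF wf e12(1)] by blast
    have "u \<in> P" "w \<in> P" using uw eP by auto
    moreover have "f u = f w" using fr uw by simp
    ultimately have same: "(u \<in> P2) = (w \<in> P2)" unfolding f_def by simp
    obtain p2 q2 where pq2: "p2 \<in> P2" "q2 \<in> Q2" "endpts K \<epsilon>1 = {p2,q2}"
      using b2 e12(1) unfolding bipartition_def by auto
    have "{u,w} = {p2,q2}" using uw pq2 by simp
    thus False using same pq2 P2Q2 unfolding doubleton_eq_iff by blast
  qed
  have c2: "card (verts K) \<ge> 2" using V4 by simp
  have mcH: "matching_covered ?H"
    unfolding matching_covered_def using wf_del_edges[OF wf] connH c2 admH by simp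
  have mcK: "matching_covered K"
    unfolding matching_covered_def
  proof (intro conjI ballI)
    show "wf_graph K" by fact
    show "connected_graph K" by (rule kconn_connected[OF kc])
    show "2 \<le> card (verts K)" by fact
    fix e assume e: "e \<in> edges K"
    show "admissible K e"
    proof (cases "e \<in> {\<epsilon>1,\<epsilon>2}")
      case True thus ?thesis using pm12 unfolding admissible_def by auto
    next
      case False
      hence "admissible ?H e" using admH e by simp
      thus ?thesis unfolding admissible_def using pm_of_del_edges by blast
    qed
  qed
  have "bipartite ?H" unfolding bipartite_def using bip by blast
  thus ?thesis unfolding near_bipartite_rd_def using mcK nbK e12 mcH by simp
qed

lemma near_bip_sym: "near_bipartite_rd G e1 e2 \<Longrightarrow> near_bipartite_rd G e2 e1"
  unfolding near_bipartite_rd_def by (auto simp: insert_commute)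




lemma sum_split2:
  assumes "finite B" "e1 \<noteq> e2"
  shows "(\<Sum>e\<in>B. f e) = (if e1 \<in> B then f e1 else 0) + (if e2 \<in> B then f e2 else 0) + (\<Sum>e\<in>B - {e1,e2}. f e)"
proof -
  have "(\<Sum>e\<in>B. f e) = (\<Sum>e\<in>B \<inter> {e1,e2}. f e) + (\<Sum>e\<in>B - {e1,e2}. f e)"
    using assms(1) by (metis sum.Int_Diff)
  moreover have "(\<Sum>e\<in>B \<inter> {e1,e2}. f e) = (if e1 \<in> B then f e1 else 0) + (if e2 \<in> B then f e2 else 0)"
    using assms(2) by (cases "e1 \<in> B"; cases "e2 \<in> B") (auto simp: Int_insert_right)
  ultimately show ?thesis by simp
qed

lemma pm_sum_int:
  assumes "wf_graph G" "perfect_matching G M" "Y1 \<subseteq> verts G" "Y2 \<subseteq> verts G"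
  shows "(\<Sum>e\<in>M. int (card (endpts G e \<inter> Y1)) - int (card (endpts G e \<inter> Y2))) = int (card Y1) - int (card Y2)"
  using pm_sum[OF assms(1,2,3)] pm_sum[OF assms(1,2,4)]
  by (simp add: sum_subtractf flip: of_nat_sum)

lemma cubic_sum_int:
  assumes "cubic G" "Y1 \<subseteq> verts G" "Y2 \<subseteq> verts G"
  shows "(\<Sum>e\<in>edges G. int (card (endpts G e \<inter> Y1)) - int (card (endpts G e \<inter> Y2))) = 3 * int (card Y1) - 3 * int (card Y2)"
  using cubic_sum[OF assms(1,2)] cubic_sum[OF assms(1,3)]
  by (simp add: sum_subtractf flip: of_nat_sum)

locale S13 =
  fixes G :: "('v, 'e) mgraph" and e1 e2 :: 'e and U W X :: "'v set"
  assumes conn3: "k_connected 3 G"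
    and cub: "cubic G"
    and nb: "near_bipartite_rd G e1 e2"
    and bip: "bipartition (del_edges G {e1, e2}) U W"
    and e1U: "endpts G e1 \<subseteq> U"
    and XV: "X \<subseteq> verts G"
    and nt1: "card X \<ge> 2" and nt2: "card (verts G - X) \<ge> 2"
    and cut3: "card (cut G X) = 3"
begin

lemma wf: "wf_graph G" using cub by (simp add: cubic_def)
lemma fV: "finite (verts G)" by (rule wf_finite_verts[OF wf])
lemma fE: "finite (edges G)" by (rule wf_finite_edges[OF wf])
lemma UW: "U \<inter> W = {}" "U \<union> W = verts G" using bip by (auto simp: bipartition_def)
lemma Hedge: "e \<in> edges G \<Longrightarrow> e \<noteq> e1 \<Longrightarrow> e \<noteq> e2 \<Longrightarrow> \<exists>u\<in>U. \<exists>w\<in>W. endpts G e = {u,w}"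
  using bip by (auto simp: bipartition_def)
lemma e12: "e1 \<in> edges G" "e2 \<in> edges G" "e1 \<noteq> e2" using nb by (auto simp: near_bipartite_rd_def)
lemma mcG: "matching_covered G" using nb by (simp add: near_bipartite_rd_def)
lemma mcH: "matching_covered (del_edges G {e1,e2})" using nb by (simp add: near_bipartite_rd_def)
lemma fU: "finite U" using UW fV by (metis finite_Un)
lemma fW: "finite W" using UW fV by (metis finite_Un)
lemma fX: "finite X" using XV fV by (rule finite_subset)

lemma oddX: "odd (card X)" by (rule odd_cut[OF cub XV cut3])
lemma oddXc: "odd (card (verts G - X))"
  using odd_cut[OF cub _ ] cut_compl[OF wf, of X] cut3 by simp
lemma cX3: "card X \<ge> 3" using oddX nt1 by presburger
lemma cXc3: "card (verts G - X) \<ge> 3" using oddXc nt2 by presburger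
lemma VXX: "verts G - (verts G - X) = X" using XV by auto

lemma K1: "cubic (contract G X)" "k_connected 3 (contract G X)"
  using cubic_contract[OF cub XV cut3] kconn_contract[OF conn3 XV nt1 cXc3] cut3 by auto

lemma K2: "cubic (contract G (verts G - X))" "k_connected 3 (contract G (verts G - X))"
proof -
  have c: "card (cut G (verts G - X)) = 3" using cut_compl[OF wf, of X] cut3 by simp
  show "cubic (contract G (verts G - X))" by (rule cubic_contract[OF cub _ c]) auto
  show "k_connected 3 (contract G (verts G - X))"
    by (rule kconn_contract[OF conn3]) (use c nt2 cX3 VXX in auto)
qed


lemma ind_sum:
  assumes "finite B" "C \<subseteq> B"
  shows "(\<Sum>e\<in>B. if e \<in> C then 1 else 0 :: int) = int (card C)"
proof -
  have "(\<Sum>e\<in>B. if e \<in> C then 1 else 0 :: int) = (\<Sum>e\<in>B \<inter> C. 1)"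
    using assms(1) by (simp add: sum.If_cases Int_def)
  also have "B \<inter> C = C" using assms(2) by blast
  finally show ?thesis by simp
qed

definition psi where "psi e = int (card (endpts G e \<inter> U)) - int (card (endpts G e \<inter> W))"
definition phi where "phi e = int (card (endpts G e \<inter> (X \<inter> U))) - int (card (endpts G e \<inter> (X \<inter> W)))"
definition CUW where "CUW = edges_between G (X \<inter> U) ((verts G - X) \<inter> W)"
definition CWU where "CWU = edges_between G (X \<inter> W) ((verts G - X) \<inter> U)"
definition d1 where "d1 = card (endpts G e1 \<inter> X)"
definition d2 where "d2 = card (endpts G e2 \<inter> X)"

lemma psi_H: "e \<in> edges G \<Longrightarrow> e \<noteq> e1 \<Longrightarrow> e \<noteq> e2 \<Longrightarrow> psi e = 0"
proof -
  assume e: "e \<in> edges G" "e \<noteq> e1" "e \<noteq> e2"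
  then obtain u w where uw: "u \<in> U" "w \<in> W" "endpts G e = {u,w}" using Hedge by blast
  have "u \<notin> W" "w \<notin> U" using uw UW by auto
  thus "psi e = 0" unfolding psi_def using uw by (simp add: Int_insert_left)
qed

lemma psi_e1: "psi e1 = 2"
proof -
  have "endpts G e1 \<inter> U = endpts G e1" using e1U by auto
  moreover have "endpts G e1 \<inter> W = {}" using e1U UW by auto
  ultimately show ?thesis unfolding psi_def using wf_card2[OF wf e12(1)] by simp
qed

lemma H_pm: "\<exists>N. perfect_matching (del_edges G {e1,e2}) N"
proof -
  have "card (verts G) > 3" using conn3 by (simp add: k_connected_def)
  then obtain v where v: "v \<in> verts G" by (metis card.empty ex_in_conv not_less_zero)
  let ?Ev = "{e \<in> edges G. v \<in> endpts G e}"
  have "card ?Ev = 3" using cub v by (simp add: cubic_def degree_def)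
  moreover have "card (?Ev - {e1,e2}) \<ge> card ?Ev - card {e1,e2}" by (rule diff_card_le_card_Diff) simp
  moreover have "card {e1,e2} \<le> 2" by (simp add: card_insert_if)
  ultimately have "card (?Ev - {e1,e2}) \<ge> 1" by linarith
  then obtain e where "e \<in> ?Ev - {e1,e2}" by (metis card.empty ex_in_conv not_one_le_zero)
  hence "e \<in> edges (del_edges G {e1,e2})" by simp
  hence "admissible (del_edges G {e1,e2}) e" using mcH by (simp add: matching_covered_def)
  thus ?thesis unfolding admissible_def by blast
qed

lemma cardUW: "card U = card W"
proof -
  obtain N where N: "perfect_matching (del_edges G {e1,e2}) N" using H_pm by blast
  have wfH: "wf_graph (del_edges G {e1,e2})" by (rule wf_del_edges[OF wf])
  have "(\<Sum>e\<in>N. int (card (endpts (del_edges G {e1,e2}) e \<inter> U)) - int (card (endpts (del_edges G {e1,e2}) e \<inter> W)))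
        = int (card U) - int (card W)"
    by (rule pm_sum_int[OF wfH N]) (use UW in auto)
  moreover have "(\<Sum>e\<in>N. int (card (endpts (del_edges G {e1,e2}) e \<inter> U)) - int (card (endpts (del_edges G {e1,e2}) e \<inter> W))) = 0"
  proof (rule sum.neutral, rule ballI)
    fix e assume "e \<in> N"
    hence "e \<in> edges G" "e \<noteq> e1" "e \<noteq> e2" using N by (auto simp: perfect_matching_def)
    thus "int (card (endpts (del_edges G {e1,e2}) e \<inter> U)) - int (card (endpts (del_edges G {e1,e2}) e \<inter> W)) = 0"
      using psi_H unfolding psi_def by simp
  qed
  ultimately show ?thesis by simp
qed

lemma pm_psi:
  assumes M: "perfect_matching G M"
  shows "(if e1 \<in> M then 2 else 0) + (if e2 \<in> M then psi e2 else 0) = 0"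
proof -
  have fM: "finite M" using M fE finite_subset unfolding perfect_matching_def by blast
  have "(\<Sum>e\<in>M. psi e) = int (card U) - int (card W)"
    unfolding psi_def by (rule pm_sum_int[OF wf M]) (use UW in auto)
  hence "(\<Sum>e\<in>M. psi e) = 0" using cardUW by simp
  moreover have "(\<Sum>e\<in>M - {e1,e2}. psi e) = 0"
    using M psi_H by (intro sum.neutral) (auto simp: perfect_matching_def)
  ultimately have "(if e1 \<in> M then psi e1 else 0) + (if e2 \<in> M then psi e2 else 0) = 0"
    using sum_split2[OF fM e12(3), of psi] by simp
  thus ?thesis using psi_e1 by (cases "e1 \<in> M") simp_all
qed

lemma e2W: "endpts G e2 \<subseteq> W"
proof -
  obtain M where M: "perfect_matching G M" "e1 \<in> M"
    using mcG e12 unfolding matching_covered_def admissible_def by blast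
  have eq: "2 + (if e2 \<in> M then psi e2 else 0) = 0" using pm_psi[OF M(1)] M(2) by simp
  have c2: "card (endpts G e2 \<inter> W) \<le> 2" by (rule card_int_le2[OF wf e12(2)])
  have "e2 \<in> M" using eq by (auto split: if_splits)
  hence "psi e2 = -2" using eq by simp
  hence "card (endpts G e2 \<inter> W) = 2" using c2 unfolding psi_def by linarith
  hence "card (endpts G e2 \<inter> W) = card (endpts G e2)" using wf_card2[OF wf e12(2)] by simp
  hence "endpts G e2 \<inter> W = endpts G e2"
    using card_subset_eq[of "endpts G e2" "endpts G e2 \<inter> W"] wf_endpts[OF wf e12(2)] fV
      finite_subset by blast
  thus ?thesis by blast
qed

lemma psi_e2: "psi e2 = -2"
proof -
  have "endpts G e2 \<inter> W = endpts G e2" using e2W by auto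
  moreover have "endpts G e2 \<inter> U = {}" using e2W UW by auto
  ultimately show ?thesis unfolding psi_def using wf_card2[OF wf e12(2)] by simp
qed

lemma pm_e12: "perfect_matching G M \<Longrightarrow> e1 \<in> M \<longleftrightarrow> e2 \<in> M"
  using pm_psi[of M] psi_e2 by (auto split: if_splits)


lemma H_ends:
  assumes "e \<in> edges G" "e \<noteq> e1" "e \<noteq> e2"
  obtains u w where "u \<in> U" "w \<in> W" "endpts G e = {u,w}" "u \<notin> W" "w \<notin> U" "u \<in> verts G" "w \<in> verts G"
proof -
  obtain u w where uw: "u \<in> U" "w \<in> W" "endpts G e = {u,w}" using Hedge[OF assms] by blast
  moreover have "u \<notin> W" "w \<notin> U" using uw UW by auto
  moreover have "u \<in> verts G" "w \<in> verts G" using uw UW by auto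
  ultimately show ?thesis using that by blast
qed

lemma CUW_iff:
  assumes "e \<in> edges G" "endpts G e = {u,w}" "u \<in> U" "w \<in> W"
  shows "e \<in> CUW \<longleftrightarrow> u \<in> X \<and> w \<notin> X"
proof
  assume "e \<in> CUW"
  then obtain y z where yz: "y \<in> X \<inter> U" "z \<in> (verts G - X) \<inter> W" "endpts G e = {y,z}"
    unfolding CUW_def edges_between_def by blast
  have "{u,w} = {y,z}" using yz assms by simp
  moreover have "y \<noteq> w" using yz assms UW by auto
  ultimately have "y = u" "z = w" unfolding doubleton_eq_iff by auto
  thus "u \<in> X \<and> w \<notin> X" using yz by auto
next
  assume "u \<in> X \<and> w \<notin> X"
  thus "e \<in> CUW" unfolding CUW_def edges_between_def using assms UW by blast
qed

lemma CWU_iff: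
  assumes "e \<in> edges G" "endpts G e = {u,w}" "u \<in> U" "w \<in> W"
  shows "e \<in> CWU \<longleftrightarrow> w \<in> X \<and> u \<notin> X"
proof
  assume "e \<in> CWU"
  then obtain y z where yz: "y \<in> X \<inter> W" "z \<in> (verts G - X) \<inter> U" "endpts G e = {y,z}"
    unfolding CWU_def edges_between_def by blast
  have "{u,w} = {y,z}" using yz assms by simp
  moreover have "y \<noteq> u" using yz assms UW by auto
  ultimately have "y = w" "z = u" unfolding doubleton_eq_iff by auto
  thus "w \<in> X \<and> u \<notin> X" using yz by auto
next
  assume a: "w \<in> X \<and> u \<notin> X"
  have "endpts G e = {w,u}" using assms by (simp add: insert_commute)
  thus "e \<in> CWU" unfolding CWU_def edges_between_def using assms UW a by blast
qed

lemma C_H: "CUW \<subseteq> edges G - {e1,e2}" "CWU \<subseteq> edges G - {e1,e2}"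
proof -
  have n1: "e1 \<notin> CUW \<and> e1 \<notin> CWU"
  proof -
    have "\<not> (\<exists>y z. z \<in> W \<and> endpts G e1 = {y,z})" using e1U UW by blast
    moreover have "\<not> (\<exists>y z. y \<in> W \<and> endpts G e1 = {y,z})" using e1U UW by blast
    ultimately show ?thesis unfolding CUW_def CWU_def edges_between_def by blast
  qed
  have n2: "e2 \<notin> CUW \<and> e2 \<notin> CWU"
  proof -
    have "\<not> (\<exists>y z. y \<in> U \<and> endpts G e2 = {y,z})" using e2W UW by blast
    moreover have "\<not> (\<exists>y z. z \<in> U \<and> endpts G e2 = {y,z})" using e2W UW by blast
    ultimately show ?thesis unfolding CUW_def CWU_def edges_between_def by blast
  qed
  show "CUW \<subseteq> edges G - {e1,e2}" using n1 n2 unfolding CUW_def edges_between_def by auto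
  show "CWU \<subseteq> edges G - {e1,e2}" using n1 n2 unfolding CWU_def edges_between_def by auto
qed

lemma C_disj: "CUW \<inter> CWU = {}"
proof (rule ccontr)
  assume "CUW \<inter> CWU \<noteq> {}"
  then obtain e where e: "e \<in> CUW" "e \<in> CWU" by blast
  hence eH: "e \<in> edges G" "e \<noteq> e1" "e \<noteq> e2" using C_H by auto
  obtain u w where uw: "u \<in> U" "w \<in> W" "endpts G e = {u,w}" by (rule H_ends[OF eH])
  show False using CUW_iff[OF eH(1) uw(3,1,2)] CWU_iff[OF eH(1) uw(3,1,2)] e by simp
qed

lemma phi_H: "e \<in> edges G \<Longrightarrow> e \<noteq> e1 \<Longrightarrow> e \<noteq> e2 \<Longrightarrow>
   phi e = (if e \<in> CUW then 1 else 0) - (if e \<in> CWU then 1 else 0)"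
proof -
  assume eH: "e \<in> edges G" "e \<noteq> e1" "e \<noteq> e2"
  obtain u w where uw: "u \<in> U" "w \<in> W" "endpts G e = {u,w}" "u \<notin> W" "w \<notin> U" by (rule H_ends[OF eH])
  have "u \<noteq> w" using uw by auto
  thus ?thesis unfolding phi_def using CUW_iff[OF eH(1) uw(3,1,2)] CWU_iff[OF eH(1) uw(3,1,2)] uw
    by (cases "u \<in> X"; cases "w \<in> X") (auto simp: Int_insert_left)
qed

lemma cut_H: "e \<in> edges G \<Longrightarrow> e \<noteq> e1 \<Longrightarrow> e \<noteq> e2 \<Longrightarrow> e \<in> cut G X \<longleftrightarrow> e \<in> CUW \<or> e \<in> CWU"
proof -
  assume eH: "e \<in> edges G" "e \<noteq> e1" "e \<noteq> e2"
  obtain u w where uw: "u \<in> U" "w \<in> W" "endpts G e = {u,w}" "u \<notin> W" "w \<notin> U" by (rule H_ends[OF eH])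
  have "u \<noteq> w" using uw by auto
  thus ?thesis unfolding cut_def using CUW_iff[OF eH(1) uw(3,1,2)] CWU_iff[OF eH(1) uw(3,1,2)] uw eH(1)
    by (cases "u \<in> X"; cases "w \<in> X") (auto simp: Int_insert_left)
qed

lemma phi_e1: "phi e1 = int d1"
proof -
  have "endpts G e1 \<inter> (X \<inter> U) = endpts G e1 \<inter> X" using e1U by auto
  moreover have "endpts G e1 \<inter> (X \<inter> W) = {}" using e1U UW by auto
  ultimately show ?thesis unfolding phi_def d1_def by simp
qed

lemma phi_e2: "phi e2 = - int d2"
proof -
  have "endpts G e2 \<inter> (X \<inter> W) = endpts G e2 \<inter> X" using e2W by auto
  moreover have "endpts G e2 \<inter> (X \<inter> U) = {}" using e2W UW by auto
  ultimately show ?thesis unfolding phi_def d2_def by simp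
qed

lemma e1cut: "e1 \<in> cut G X \<longleftrightarrow> d1 = 1" using e12 unfolding cut_def d1_def by simp
lemma e2cut: "e2 \<in> cut G X \<longleftrightarrow> d2 = 1" using e12 unfolding cut_def d2_def by simp

lemma sum_phi_B:
  assumes B: "B \<subseteq> edges G"
  shows "(\<Sum>e\<in>B. phi e) = (if e1 \<in> B then int d1 else 0) + (if e2 \<in> B then - int d2 else 0)
      + int (card (B \<inter> CUW)) - int (card (B \<inter> CWU))"
proof -
  have fB: "finite B" using B fE finite_subset by blast
  have fB': "finite (B - {e1,e2})" using fB by simp
  have "(\<Sum>e\<in>B - {e1,e2}. phi e) = (\<Sum>e\<in>B - {e1,e2}. (if e \<in> B \<inter> CUW then 1 else 0) - (if e \<in> B \<inter> CWU then 1 else 0))"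
    using B phi_H by (intro sum.cong) auto
  also have "\<dots> = int (card (B \<inter> CUW)) - int (card (B \<inter> CWU))"
  proof -
    have s1: "B \<inter> CUW \<subseteq> B - {e1,e2}" and s2: "B \<inter> CWU \<subseteq> B - {e1,e2}" using C_H by auto
    show ?thesis by (simp only: sum_subtractf ind_sum[OF fB' s1] ind_sum[OF fB' s2])
  qed
  finally show ?thesis using sum_split2[OF fB e12(3), of phi] phi_e1 phi_e2 by simp
qed

lemma card_cut_B:
  assumes B: "B \<subseteq> edges G"
  shows "int (card (B \<inter> cut G X)) = (if e1 \<in> B \<and> d1 = 1 then 1 else 0) + (if e2 \<in> B \<and> d2 = 1 then 1 else 0)
      + int (card (B \<inter> CUW)) + int (card (B \<inter> CWU))"
proof -
  have fB: "finite B" using B fE finite_subset by blast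
  have fB': "finite (B - {e1,e2})" using fB by simp
  let ?i = "\<lambda>e. if e \<in> B \<inter> cut G X then 1 else 0 :: int"
  have "int (card (B \<inter> cut G X)) = (\<Sum>e\<in>B. ?i e)" using ind_sum[OF fB, of "B \<inter> cut G X"] by simp
  also have "\<dots> = (if e1 \<in> B then ?i e1 else 0) + (if e2 \<in> B then ?i e2 else 0) + (\<Sum>e\<in>B - {e1,e2}. ?i e)"
    by (rule sum_split2[OF fB e12(3)])
  also have "(\<Sum>e\<in>B - {e1,e2}. ?i e) = (\<Sum>e\<in>B - {e1,e2}. (if e \<in> B \<inter> CUW then 1 else 0) + (if e \<in> B \<inter> CWU then 1 else 0))"
    using B cut_H C_disj by (intro sum.cong) auto
  also have "\<dots> = int (card (B \<inter> CUW)) + int (card (B \<inter> CWU))"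
  proof -
    have s1: "B \<inter> CUW \<subseteq> B - {e1,e2}" and s2: "B \<inter> CWU \<subseteq> B - {e1,e2}" using C_H by auto
    show ?thesis by (simp only: sum.distrib ind_sum[OF fB' s1] ind_sum[OF fB' s2])
  qed
  finally show ?thesis using e1cut e2cut by auto
qed


lemma XUV: "X \<inter> U \<subseteq> verts G" "X \<inter> W \<subseteq> verts G" using XV by auto

lemma glob1: "3 * int (card (X \<inter> U)) - 3 * int (card (X \<inter> W)) = int d1 - int d2 + int (card CUW) - int (card CWU)"
proof -
  have "(\<Sum>e\<in>edges G. phi e) = 3 * int (card (X \<inter> U)) - 3 * int (card (X \<inter> W))"
    unfolding phi_def by (rule cubic_sum_int[OF cub XUV])
  moreover have "edges G \<inter> CUW = CUW" "edges G \<inter> CWU = CWU" using C_H by auto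
  ultimately show ?thesis using sum_phi_B[of "edges G"] e12 by simp
qed

lemma glob2: "3 = (if d1 = 1 then 1 else 0) + (if d2 = 1 then 1 else 0) + card CUW + card CWU"
proof -
  have "edges G \<inter> CUW = CUW" "edges G \<inter> CWU = CWU" using C_H by auto
  moreover have "edges G \<inter> cut G X = cut G X" using cut_subset_edges[of G X] by blast
  ultimately have "int (card (cut G X)) = (if d1 = 1 then 1 else 0) + (if d2 = 1 then 1 else 0)
      + int (card CUW) + int (card CWU)" using card_cut_B[of "edges G"] e12 by simp
  thus ?thesis using cut3 by (simp split: if_splits)
qed

lemma cardX: "card X = card (X \<inter> U) + card (X \<inter> W)"
proof -
  have "X = (X \<inter> U) \<union> (X \<inter> W)" using XV UW by auto
  moreover have "(X \<inter> U) \<inter> (X \<inter> W) = {}" using UW by auto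
  ultimately show ?thesis using fX card_Un_disjoint[of "X \<inter> U" "X \<inter> W"] by (metis finite_Int)
qed

lemma d12: "d1 \<le> 2" "d2 \<le> 2" unfolding d1_def d2_def using card_int_le2[OF wf] e12 by auto

lemma part_i:
  assumes "card (X \<inter> U) \<ge> card (X \<inter> W)"
  shows "card (X \<inter> U) = card (X \<inter> W) + 1"
proof -
  have "3 * int (card (X \<inter> U)) - 3 * int (card (X \<inter> W)) \<le> 5"
    using glob1 glob2 d12 by (simp split: if_splits)
  hence "3 * (card (X \<inter> U) - card (X \<inter> W)) \<le> 5" using assms by linarith
  moreover have "odd (card (X \<inter> U) + card (X \<inter> W))" using oddX cardX by simp
  ultimately show ?thesis using assms by presburger
qed

lemma pm_phi:
  assumes "perfect_matching G M"
  shows "(\<Sum>e\<in>M. phi e) = int (card (X \<inter> U)) - int (card (X \<inter> W))"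
  unfolding phi_def by (rule pm_sum_int[OF wf assms XUV])

lemma pm_subset: "perfect_matching G M \<Longrightarrow> M \<subseteq> edges G" by (simp add: perfect_matching_def)

lemma pm_eqs:
  assumes ab: "card (X \<inter> U) = card (X \<inter> W) + 1" and M: "perfect_matching G M"
  shows "1 = (if e1 \<in> M then int d1 - int d2 else 0) + int (card (M \<inter> CUW)) - int (card (M \<inter> CWU))"
    and "int (card (M \<inter> cut G X)) = (if e1 \<in> M \<and> d1 = 1 then 1 else 0) + (if e1 \<in> M \<and> d2 = 1 then 1 else 0)
      + int (card (M \<inter> CUW)) + int (card (M \<inter> CWU))"
    and "card (M \<inter> CUW) \<le> card CUW" "card (M \<inter> CWU) \<le> card CWU"
proof -
  have MB: "M \<subseteq> edges G" by (rule pm_subset[OF M])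
  have eq: "e2 \<in> M \<longleftrightarrow> e1 \<in> M" using pm_e12[OF M] by simp
  show "1 = (if e1 \<in> M then int d1 - int d2 else 0) + int (card (M \<inter> CUW)) - int (card (M \<inter> CWU))"
    using sum_phi_B[OF MB] pm_phi[OF M] ab eq by (cases "e1 \<in> M") simp_all
  show "int (card (M \<inter> cut G X)) = (if e1 \<in> M \<and> d1 = 1 then 1 else 0) + (if e1 \<in> M \<and> d2 = 1 then 1 else 0)
      + int (card (M \<inter> CUW)) + int (card (M \<inter> CWU))"
    using card_cut_B[OF MB] eq by simp
  have fC: "finite CUW" "finite CWU" using C_H fE finite_subset by blast+
  show "card (M \<inter> CUW) \<le> card CUW" "card (M \<inter> CWU) \<le> card CWU"
    using fC by (auto intro: card_mono)
qed

lemma tight: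
  assumes ab: "card (X \<inter> U) = card (X \<inter> W) + 1" and nd: "\<not> (d1 = 2 \<and> d2 = 0)"
  shows "tight_cut G X"
  unfolding tight_cut_def
proof (intro allI impI)
  fix M assume M: "perfect_matching G M"
  note E = pm_eqs[OF ab M]
  have g1: "3 * int (card (X \<inter> U)) - 3 * int (card (X \<inter> W)) = int d1 - int d2 + int (card CUW) - int (card CWU)"
    by (rule glob1)
  have g2: "3 = (if d1 = 1 then 1 else 0) + (if d2 = 1 then 1 else 0) + card CUW + card CWU" by (rule glob2)
  have dd: "d1 = 0 \<or> d1 = 1 \<or> d1 = 2" "d2 = 0 \<or> d2 = 1 \<or> d2 = 2" using d12 by auto
  have "int (card (M \<inter> cut G X)) = 1"
    using E g1 g2 dd nd ab by (cases "e1 \<in> M") (auto split: if_splits)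
  thus "card (M \<inter> cut G X) = 1" by simp
qed


lemma counts:
  assumes ab: "card (X \<inter> U) = card (X \<inter> W) + 1" and dd: "d1 = 2" "d2 = 0"
  shows "card CUW = 2" "card CWU = 1"
  using glob1 glob2 ab dd by (simp_all split: if_splits)

lemma e1XU: "d1 = 2 \<Longrightarrow> endpts G e1 \<subseteq> X \<inter> U"
proof -
  assume "d1 = 2"
  hence "card (endpts G e1 \<inter> X) = card (endpts G e1)" using wf_card2[OF wf e12(1)] unfolding d1_def by simp
  moreover have "finite (endpts G e1)" using wf_endpts[OF wf e12(1)] fV finite_subset by blast
  ultimately have "endpts G e1 \<inter> X = endpts G e1" using card_subset_eq[of "endpts G e1" "endpts G e1 \<inter> X"] by simp
  thus ?thesis using e1U by blast
qed

lemma e2XcW: "d2 = 0 \<Longrightarrow> endpts G e2 \<subseteq> (verts G - X) \<inter> W"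
proof -
  assume "d2 = 0"
  moreover have "finite (endpts G e2 \<inter> X)" using fX by simp
  ultimately have "endpts G e2 \<inter> X = {}" unfolding d2_def by simp
  thus ?thesis using e2W wf_endpts[OF wf e12(2)] by blast
qed

lemma f_ends:
  assumes "f \<in> CWU"
  obtains z w where "endpts G f = {z,w}" "w \<in> X \<inter> W" "z \<in> (verts G - X) \<inter> U"
proof -
  obtain y z where yz: "y \<in> X \<inter> W" "z \<in> (verts G - X) \<inter> U" "endpts G f = {y,z}"
    using assms unfolding CWU_def edges_between_def by blast
  have "endpts G f = {z,y}" using yz by (simp add: insert_commute)
  thus ?thesis using that yz by blast
qed

lemma not_tight:
  assumes ab: "card (X \<inter> U) = card (X \<inter> W) + 1" and dd: "d1 = 2" "d2 = 0"
  shows "\<not> tight_cut G X"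
proof -
  have "card CWU = 1" using counts[OF ab dd] by simp
  then obtain f where f: "CWU = {f}" by (rule card_1_singletonE)
  have fH: "f \<in> edges (del_edges G {e1,e2})" using C_H f by auto
  then obtain N where N: "perfect_matching (del_edges G {e1,e2}) N" "f \<in> N"
    using mcH unfolding matching_covered_def admissible_def by blast
  have NG: "perfect_matching G N" and Ne: "N \<inter> {e1,e2} = {}" using pm_of_del_edges[OF N(1)] by auto
  note E = pm_eqs[OF ab NG]
  have "e1 \<notin> N" using Ne by auto
  moreover have "N \<inter> CWU = {f}" using f N(2) by auto
  ultimately have "int (card (N \<inter> cut G X)) \<noteq> 1" using E by simp
  hence "card (N \<inter> cut G X) \<noteq> 1" by simp
  thus ?thesis unfolding tight_cut_def using NG by blast
qed

lemma f_nonrem: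
  assumes ab: "card (X \<inter> U) = card (X \<inter> W) + 1" and dd: "d1 = 2" "d2 = 0" and f: "CWU = {f}"
  shows "\<not> removable G f"
proof
  assume "removable G f"
  hence mc: "matching_covered (del_edges G {f})" by (simp add: removable_def)
  have fne: "f \<noteq> e1" using C_H f by auto
  have "e1 \<in> edges (del_edges G {f})" using e12 fne by simp
  then obtain M where M: "perfect_matching (del_edges G {f}) M" "e1 \<in> M"
    using mc unfolding matching_covered_def admissible_def by blast
  have MG: "perfect_matching G M" and fM: "f \<notin> M" using pm_of_del_edges[OF M(1)] by auto
  note E = pm_eqs[OF ab MG]
  have "M \<inter> CWU = {}" using f fM by auto
  thus False using E(1) M(2) dd by simp
qed

end




context S13
begin

lemma nbK2:
  assumes ab: "card (X \<inter> U) = card (X \<inter> W) + 1" and dd: "d1 = 2" "d2 = 0" and f: "CWU = {f}"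
  shows "near_bipartite_rd (contract G (verts G - X)) e1 f"
proof -
  let ?Y = "verts G - X"
  let ?K = "contract G ?Y"
  let ?P = "Some ` (X \<inter> U)" and ?Q = "insert None (Some ` (X \<inter> W))"
  obtain z w where zw: "endpts G f = {z,w}" "w \<in> X \<inter> W" "z \<in> (verts G - X) \<inter> U"
    using f_ends[of f] f by blast
  have fH: "f \<in> edges G" "f \<noteq> e1" "f \<noteq> e2" using C_H f by auto
  have e1X: "endpts G e1 \<subseteq> X \<inter> U" by (rule e1XU[OF dd(1)])
  have e2X: "endpts G e2 \<subseteq> (verts G - X) \<inter> W" by (rule e2XcW[OF dd(2)])
  have e1ne: "endpts G e1 \<noteq> {}" using wf_card2[OF wf e12(1)] by auto
  have e2ne: "endpts G e2 \<noteq> {}" using wf_card2[OF wf e12(2)] by auto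
  have vK: "verts ?K = insert None (Some ` X)" using VXX by simp
  have e1K: "e1 \<in> edges ?K" using e12 e1X e1ne by auto
  have fK: "f \<in> edges ?K" using fH zw by auto
  have bipK: "bipartition (del_edges ?K {e1,f}) ?P ?Q"
    unfolding bipartition_def
  proof (intro conjI ballI)
    show "?P \<inter> ?Q = {}" using UW by auto
    show "?P \<union> ?Q = verts (del_edges ?K {e1,f})" using vK XV UW by auto
    fix e assume e: "e \<in> edges (del_edges ?K {e1,f})"
    hence eG: "e \<in> edges G" "\<not> endpts G e \<subseteq> ?Y" "e \<noteq> e1" "e \<noteq> f" by auto
    have "e \<noteq> e2" using eG(2) e2X by auto
    then obtain u w' where uw: "u \<in> U" "w' \<in> W" "endpts G e = {u,w'}" "u \<in> verts G" "w' \<in> verts G"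
      using H_ends[OF eG(1,3)] by metis
    have uX: "u \<in> X"
    proof (rule ccontr)
      assume "u \<notin> X"
      hence "w' \<in> X" using eG(2) uw by auto
      hence "e \<in> CWU" using CWU_iff[OF eG(1) uw(3,1,2)] \<open>u \<notin> X\<close> by simp
      thus False using f eG(4) by auto
    qed
    have "endpts (del_edges ?K {e1,f}) e = {Some u, cmap ?Y w'}" using uw uX by simp
    moreover have "Some u \<in> ?P" using uX uw by auto
    moreover have "cmap ?Y w' \<in> ?Q" using uw by (cases "w' \<in> X") auto
    ultimately show "\<exists>p\<in>?P. \<exists>q\<in>?Q. endpts (del_edges ?K {e1,f}) e = {p,q}" by blast
  qed
  have eP: "endpts ?K e1 \<subseteq> ?P" using e1X by (auto simp: cmap_def)
  have eQ: "endpts ?K f \<subseteq> ?Q" using zw by auto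
  have cPQ: "card ?P = card ?Q"
  proof -
    have "card ?P = card (X \<inter> U)" by (simp add: card_image)
    moreover have "card ?Q = card (X \<inter> W) + 1" using fX by (simp add: card_image)
    ultimately show ?thesis using ab by simp
  qed
  show ?thesis by (rule near_bip_cubic[OF K2(2) K2(1) e1K fK fH(2)[symmetric] bipK eP eQ cPQ])
qed

lemma nbK1:
  assumes ab: "card (X \<inter> U) = card (X \<inter> W) + 1" and dd: "d1 = 2" "d2 = 0" and f: "CWU = {f}"
  shows "near_bipartite_rd (contract G X) e2 f"
proof -
  let ?K = "contract G X"
  let ?P = "insert None (Some ` ((verts G - X) \<inter> U))" and ?Q = "Some ` ((verts G - X) \<inter> W)"
  obtain z w where zw: "endpts G f = {z,w}" "w \<in> X \<inter> W" "z \<in> (verts G - X) \<inter> U"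
    using f_ends[of f] f by blast
  have fH: "f \<in> edges G" "f \<noteq> e1" "f \<noteq> e2" using C_H f by auto
  have e1X: "endpts G e1 \<subseteq> X \<inter> U" by (rule e1XU[OF dd(1)])
  have e2X: "endpts G e2 \<subseteq> (verts G - X) \<inter> W" by (rule e2XcW[OF dd(2)])
  have e2ne: "endpts G e2 \<noteq> {}" using wf_card2[OF wf e12(2)] by auto
  have e2K: "e2 \<in> edges ?K" using e12 e2X e2ne by auto
  have fK: "f \<in> edges ?K" using fH zw by auto
  have bipK: "bipartition (del_edges ?K {f,e2}) ?P ?Q"
    unfolding bipartition_def
  proof (intro conjI ballI)
    show "?P \<inter> ?Q = {}" using UW by auto
    show "?P \<union> ?Q = verts (del_edges ?K {f,e2})" using XV UW by auto
    fix e assume e: "e \<in> edges (del_edges ?K {f,e2})"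
    hence eG: "e \<in> edges G" "\<not> endpts G e \<subseteq> X" "e \<noteq> f" "e \<noteq> e2" by auto
    have "e \<noteq> e1" using eG(2) e1X by auto
    then obtain u w' where uw: "u \<in> U" "w' \<in> W" "endpts G e = {u,w'}" "u \<in> verts G" "w' \<in> verts G"
      using H_ends[OF eG(1) _ eG(4)] by metis
    have wX: "w' \<notin> X"
    proof
      assume "w' \<in> X"
      hence "u \<notin> X" using eG(2) uw by auto
      hence "e \<in> CWU" using CWU_iff[OF eG(1) uw(3,1,2)] \<open>w' \<in> X\<close> by simp
      thus False using f eG(3) by auto
    qed
    have "endpts (del_edges ?K {f,e2}) e = {cmap X u, Some w'}" using uw wX by simp
    moreover have "Some w' \<in> ?Q" using wX uw by auto
    moreover have "cmap X u \<in> ?P" using uw by (cases "u \<in> X") auto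
    ultimately show "\<exists>p\<in>?P. \<exists>q\<in>?Q. endpts (del_edges ?K {f,e2}) e = {p,q}" by blast
  qed
  have eP: "endpts ?K f \<subseteq> ?P" using zw by auto
  have eQ: "endpts ?K e2 \<subseteq> ?Q" using e2X by (auto simp: cmap_def)
  have cPQ: "card ?P = card ?Q"
  proof -
    have f1: "finite ((verts G - X) \<inter> U)" using fU by simp
    have "card ?P = card ((verts G - X) \<inter> U) + 1" using f1 by (simp add: card_image)
    moreover have "card ?Q = card ((verts G - X) \<inter> W)" by (simp add: card_image)
    moreover have "(verts G - X) \<inter> U = U - (X \<inter> U)" using UW by auto
    moreover have "(verts G - X) \<inter> W = W - (X \<inter> W)" using UW by auto
    moreover have "card (U - (X \<inter> U)) = card U - card (X \<inter> U)" using fU by (simp add: card_Diff_subset)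
    moreover have "card (W - (X \<inter> W)) = card W - card (X \<inter> W)" using fW by (simp add: card_Diff_subset)
    moreover have "card (X \<inter> U) \<le> card U" using fU by (simp add: card_mono)
    ultimately show ?thesis using ab cardUW by simp
  qed
  have fe2: "f \<noteq> e2" by fact
  have "near_bipartite_rd ?K f e2"
    by (rule near_bip_cubic[OF K1(2) K1(1) fK e2K fe2 bipK eP eQ cPQ])
  thus ?thesis by (rule near_bip_sym)
qed

end




theorem mainTheorem13:
  fixes G :: "('v, 'e) mgraph" and e1 e2 :: 'e and U W X :: "'v set"
  assumes conn3: "k_connected 3 G"
    and cub: "cubic G"
    and nb: "near_bipartite_rd G e1 e2"
    and bip: "bipartition (del_edges G {e1, e2}) U W"
    and e1U: "endpts G e1 \<subseteq> U"
    and XV: "X \<subseteq> verts G"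
    and nontriv: "card X \<ge> 2" "card (verts G - X) \<ge> 2"
    and cut3: "card (cut G X) = 3"
  shows "odd (card X) \<and>
    k_connected 3 (contract G X) \<and> cubic (contract G X) \<and>
    k_connected 3 (contract G (verts G - X)) \<and> cubic (contract G (verts G - X)) \<and>
    (card (X \<inter> U) \<ge> card (X \<inter> W) \<longrightarrow>
       card (X \<inter> U) = card (X \<inter> W) + 1 \<and>
       (good_cut G X \<longleftrightarrow>
          endpts G e1 \<subseteq> X \<inter> U \<and> endpts G e2 \<subseteq> (verts G - X) \<inter> W \<and>
          card (edges_between G (X \<inter> U) ((verts G - X) \<inter> W)) = 2 \<and>
          (\<exists>f z w. edges_between G (X \<inter> W) ((verts G - X) \<inter> U) = {f} \<and>
                   endpts G f = {z, w} \<and> w \<in> X \<inter> W)) \<and>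
       (good_cut G X \<longrightarrow>
          (\<exists>f z w. edges_between G (X \<inter> W) ((verts G - X) \<inter> U) = {f} \<and>
                   endpts G f = {z, w} \<and> w \<in> X \<inter> W \<and>
                   \<not> removable G f \<and>
                   near_bipartite_rd (contract G (verts G - X)) e1 f \<and>
                   near_bipartite_rd (contract G X) e2 f)))"
proof -
  interpret S13 G e1 e2 U W X
    by unfold_locales (simp_all add: conn3 cub nb bip e1U XV nontriv cut3)
  have dd_of_good: "d1 = 2 \<and> d2 = 0" if ab: "card (X \<inter> U) = card (X \<inter> W) + 1" and g: "good_cut G X"
  proof (rule ccontr)
    assume "\<not> (d1 = 2 \<and> d2 = 0)"
    hence "tight_cut G X" by (rule tight[OF ab])
    thus False using g by (simp add: good_cut_def)
  qed
  have good_of_dd: "good_cut G X" if ab: "card (X \<inter> U) = card (X \<inter> W) + 1" and dd: "d1 = 2" "d2 = 0"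
  proof -
    have "card CWU = 1" using counts[OF ab dd] by simp
    then obtain f where f: "CWU = {f}" by (rule card_1_singletonE)
    have "matching_covered (contract G X)" using nbK1[OF ab dd f] by (simp add: near_bipartite_rd_def)
    moreover have "matching_covered (contract G (verts G - X))" using nbK2[OF ab dd f] by (simp add: near_bipartite_rd_def)
    ultimately have "separating_cut G X" by (simp add: separating_cut_def)
    thus ?thesis using not_tight[OF ab dd] by (simp add: good_cut_def)
  qed
  have part2: "card (X \<inter> U) = card (X \<inter> W) + 1 \<and>
       (good_cut G X \<longleftrightarrow>
          endpts G e1 \<subseteq> X \<inter> U \<and> endpts G e2 \<subseteq> (verts G - X) \<inter> W \<and>
          card (edges_between G (X \<inter> U) ((verts G - X) \<inter> W)) = 2 \<and>
          (\<exists>f z w. edges_between G (X \<inter> W) ((verts G - X) \<inter> U) = {f} \<and>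
                   endpts G f = {z, w} \<and> w \<in> X \<inter> W)) \<and>
       (good_cut G X \<longrightarrow>
          (\<exists>f z w. edges_between G (X \<inter> W) ((verts G - X) \<inter> U) = {f} \<and>
                   endpts G f = {z, w} \<and> w \<in> X \<inter> W \<and>
                   \<not> removable G f \<and>
                   near_bipartite_rd (contract G (verts G - X)) e1 f \<and>
                   near_bipartite_rd (contract G X) e2 f))"
    if ge: "card (X \<inter> U) \<ge> card (X \<inter> W)"
  proof -
    have ab: "card (X \<inter> U) = card (X \<inter> W) + 1" by (rule part_i[OF ge])
    have fin: "\<exists>f z w. CWU = {f} \<and> endpts G f = {z, w} \<and> w \<in> X \<inter> W \<and>
                   \<not> removable G f \<and>
                   near_bipartite_rd (contract G (verts G - X)) e1 f \<and>
                   near_bipartite_rd (contract G X) e2 f" if dd: "d1 = 2" "d2 = 0"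
    proof -
      have "card CWU = 1" using counts[OF ab dd] by simp
      then obtain f where f: "CWU = {f}" by (rule card_1_singletonE)
      obtain z w where zw: "endpts G f = {z,w}" "w \<in> X \<inter> W" "z \<in> (verts G - X) \<inter> U"
        using f_ends[of f] f by blast
      have "CWU = {f} \<and> endpts G f = {z, w} \<and> w \<in> X \<inter> W \<and>
                   \<not> removable G f \<and>
                   near_bipartite_rd (contract G (verts G - X)) e1 f \<and>
                   near_bipartite_rd (contract G X) e2 f"
        using f zw f_nonrem[OF ab dd f] nbK2[OF ab dd f] nbK1[OF ab dd f] by simp
      thus ?thesis by (intro exI)
    qed
    have iff: "good_cut G X \<longleftrightarrow>
          endpts G e1 \<subseteq> X \<inter> U \<and> endpts G e2 \<subseteq> (verts G - X) \<inter> W \<and>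
          card CUW = 2 \<and>
          (\<exists>f z w. CWU = {f} \<and> endpts G f = {z, w} \<and> w \<in> X \<inter> W)"
    proof
      assume g: "good_cut G X"
      have dd: "d1 = 2" "d2 = 0" using dd_of_good[OF ab g] by auto
      obtain f z w where fzw: "CWU = {f}" "endpts G f = {z, w}" "w \<in> X \<inter> W"
        using fin[OF dd] by blast
      have "\<exists>f z w. CWU = {f} \<and> endpts G f = {z, w} \<and> w \<in> X \<inter> W"
        using fzw by blast
      thus "endpts G e1 \<subseteq> X \<inter> U \<and> endpts G e2 \<subseteq> (verts G - X) \<inter> W \<and>
          card CUW = 2 \<and> (\<exists>f z w. CWU = {f} \<and> endpts G f = {z, w} \<and> w \<in> X \<inter> W)"
        using e1XU[OF dd(1)] e2XcW[OF dd(2)] counts(1)[OF ab dd] by simp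
    next
      assume c: "endpts G e1 \<subseteq> X \<inter> U \<and> endpts G e2 \<subseteq> (verts G - X) \<inter> W \<and>
          card CUW = 2 \<and> (\<exists>f z w. CWU = {f} \<and> endpts G f = {z, w} \<and> w \<in> X \<inter> W)"
      have "endpts G e1 \<inter> X = endpts G e1" using c by auto
      hence d1: "d1 = 2" unfolding d1_def using wf_card2[OF wf e12(1)] by simp
      have "endpts G e2 \<inter> X = {}" using c by auto
      hence d2: "d2 = 0" unfolding d2_def by simp
      show "good_cut G X" by (rule good_of_dd[OF ab d1 d2])
    qed
    have g1: "good_cut G X \<longleftrightarrow>
          endpts G e1 \<subseteq> X \<inter> U \<and> endpts G e2 \<subseteq> (verts G - X) \<inter> W \<and>
          card (edges_between G (X \<inter> U) ((verts G - X) \<inter> W)) = 2 \<and>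
          (\<exists>f z w. edges_between G (X \<inter> W) ((verts G - X) \<inter> U) = {f} \<and>
                   endpts G f = {z, w} \<and> w \<in> X \<inter> W)"
      using iff unfolding CUW_def CWU_def .
    have g2: "good_cut G X \<longrightarrow>
          (\<exists>f z w. edges_between G (X \<inter> W) ((verts G - X) \<inter> U) = {f} \<and>
                   endpts G f = {z, w} \<and> w \<in> X \<inter> W \<and>
                   \<not> removable G f \<and>
                   near_bipartite_rd (contract G (verts G - X)) e1 f \<and>
                   near_bipartite_rd (contract G X) e2 f)"
    proof
      assume g: "good_cut G X"
      have dd: "d1 = 2" "d2 = 0" using dd_of_good[OF ab g] by auto
      show "\<exists>f z w. edges_between G (X \<inter> W) ((verts G - X) \<inter> U) = {f} \<and>
                   endpts G f = {z, w} \<and> w \<in> X \<inter> W \<and>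
                   \<not> removable G f \<and>
                   near_bipartite_rd (contract G (verts G - X)) e1 f \<and>
                   near_bipartite_rd (contract G X) e2 f"
        using fin[OF dd] unfolding CWU_def .
    qed
    show ?thesis by (intro conjI) (fact ab, fact g1, fact g2)
  qed
  show ?thesis
  proof (intro conjI impI)
    show "odd (card X)" by (rule oddX)
    show "k_connected 3 (contract G X)" "cubic (contract G X)" using K1 by auto
    show "k_connected 3 (contract G (verts G - X))" "cubic (contract G (verts G - X))" using K2 by auto
  qed (use part2 in blast)+
qed


end
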